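(* Let $\Omega:\mathbb{Z}[VB_n]\to\mathbb{Z}[VP_n]\otimes\mathbb{Z}[S_n]$ be the $\mathbb{Z}$-linear map defined on group elements by $\Omega(v)=v\,\big(s(\nu(v))\big)^{-1}\otimes\nu(v)$; it is an isomorphism of $\mathbb{Z}$-algebras, where $\mathbb{Z}[VP_n]\otimes\mathbb{Z}[S_n]$ carries the algebra structure of $\mathbb{Z}[VP_n\rtimes S_n]$. Let $J$ be the two-sided ideal of $\mathbb{Z}[VB_n]$ generated by $\{\sigma_i-\rho_i \mid i=1,\dots,n-1\}$. Then for every integer $d\geq 1$, $\Omega$ maps $J^d$ isomorphically onto $I^d(VP_n)\otimes\mathbb{Z}[S_n]$.
   Context: The virtual braid group $VB_n$ is the group with generators $\sigma_i,\rho_i$ ($i=1,\dots,n-1$) and defining relations: $\sigma_i\sigma_{i+1}\sigma_i=\sigma_{i+1}\sigma_i\sigma_{i+1}$ ($1\le i\le n-2$); $\sigma_i\sigma_j=\sigma_j\sigma_i$ ($|i-j|\geq 2$); $\rho_i\rho_{i+1}\rho_i=\rho_{i+1}\rho_i\rho_{i+1}$ ($1\le i\le n-2$); $\rho_i\rho_j=\rho_j\rho_i$ ($|i-j|\geq 2$); $\rho_i^2=1$; $\sigma_i\rho_j=\rho_j\sigma_i$ ($|i-j|\geq2$); $\rho_i\rho_{i+1}\sigma_i=\sigma_{i+1}\rho_i\rho_{i+1}$ ($1\le i\le n-2$). $\nu:VB_n\to S_n$ is the homomorphism $\nu(\sigma_i)=\nu(\rho_i)=(i\ i{+}1)$, $VP_n=\ker\nu$,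 and $s:S_n\to VB_n$ is the homomorphic section $s((i\ i{+}1))=\rho_i$, so that $VB_n\cong VP_n\rtimes S_n$ via $v\mapsto(v\,(s(\nu(v)))^{-1},\nu(v))$. $I(VP_n)$ denotes the augmentation ideal of $\mathbb{Z}[VP_n]$ (the two-sided ideal generated by $\{g-1\mid g\in VP_n\}$), and $I^d(VP_n)$, $J^d$ denote $d$-th powers of ideals. *)

theory Defs
  imports "HOL-Algebra.Sym_Groups" "HOL-Algebra.Ideal_Product" "HOL-Combinatorics.Transposition"
begin

definition group_ring :: "('a, 'b) monoid_scheme \<Rightarrow> ('a \<Rightarrow> int) ring" where
  "group_ring G =
    \<lparr> carrier = {f. (\<forall>x. x \<notin> carrier G \<longrightarrow> f x = 0) \<and> finite {x. f x \<noteq> 0}},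
      mult = (\<lambda>f g x. if x \<in> carrier G
                        then (\<Sum>y\<in>{y. f y \<noteq> 0}. f y * g (inv\<^bsub>G\<^esub> y \<otimes>\<^bsub>G\<^esub> x))
                        else 0),
      one = (\<lambda>x. if x = \<one>\<^bsub>G\<^esub> then 1 else 0),
      zero = (\<lambda>x. 0),
      add = (\<lambda>f g x. f x + g x) \<rparr>"

definition delta :: "'a \<Rightarrow> 'a \<Rightarrow> int" where
  "delta g = (\<lambda>x. if x = g then 1 else 0)"

definition aug_ideal :: "('a, 'b) monoid_scheme \<Rightarrow> ('a \<Rightarrow> int) set" where
  "aug_ideal G = genideal (group_ring G)
      {(\<lambda>x. delta g x - delta \<one>\<^bsub>G\<^esub> x) | g. g \<in> carrier G}"

primrec ideal_pow :: "('a, 'b) ring_scheme \<Rightarrow> 'a set \<Rightarrow> nat \<Rightarrow> 'a set" where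
  "ideal_pow R I 0 = carrier R"
| "ideal_pow R I (Suc d) = ideal_prod R I (ideal_pow R I d)"

datatype vgen = Sg nat | Rh nat

type_synonym vletter = "vgen \<times> bool"  (* True = inverse letter *)
type_synonym vword = "vletter list"

fun gidx :: "vgen \<Rightarrow> nat" where
  "gidx (Sg i) = i" | "gidx (Rh i) = i"

definition valid_letter :: "nat \<Rightarrow> vletter \<Rightarrow> bool" where
  "valid_letter n l \<longleftrightarrow> 1 \<le> gidx (fst l) \<and> gidx (fst l) < n"

definition vb_words :: "nat \<Rightarrow> vword set" where
  "vb_words n = {w. \<forall>l\<in>set w. valid_letter n l}"

definition sg :: "nat \<Rightarrow> vword" where "sg i = [(Sg i, False)]"
definition rh :: "nat \<Rightarrow> vword" where "rh i = [(Rh i, False)]"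

definition flip :: "vletter \<Rightarrow> vletter" where "flip l = (fst l, \<not> snd l)"

inductive vb_eq :: "nat \<Rightarrow> vword \<Rightarrow> vword \<Rightarrow> bool" for n where
  refl: "w \<in> vb_words n \<Longrightarrow> vb_eq n w w"
| sym: "vb_eq n u v \<Longrightarrow> vb_eq n v u"
| trans: "vb_eq n u v \<Longrightarrow> vb_eq n v w \<Longrightarrow> vb_eq n u w"
| cong: "vb_eq n u v \<Longrightarrow> a \<in> vb_words n \<Longrightarrow> b \<in> vb_words n \<Longrightarrow> vb_eq n (a @ u @ b) (a @ v @ b)"
| cancel: "valid_letter n l \<Longrightarrow> vb_eq n [l, flip l] []"
| ss_braid: "1 \<le> i \<Longrightarrow> i + 2 \<le> n \<Longrightarrow>
     vb_eq n (sg i @ sg (i+1) @ sg i) (sg (i+1) @ sg i @ sg (i+1))"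
| ss_comm: "1 \<le> i \<Longrightarrow> i < n \<Longrightarrow> 1 \<le> j \<Longrightarrow> j < n \<Longrightarrow> i + 2 \<le> j \<Longrightarrow>
     vb_eq n (sg i @ sg j) (sg j @ sg i)"
| rr_braid: "1 \<le> i \<Longrightarrow> i + 2 \<le> n \<Longrightarrow>
     vb_eq n (rh i @ rh (i+1) @ rh i) (rh (i+1) @ rh i @ rh (i+1))"
| rr_comm: "1 \<le> i \<Longrightarrow> i < n \<Longrightarrow> 1 \<le> j \<Longrightarrow> j < n \<Longrightarrow> i + 2 \<le> j \<Longrightarrow>
     vb_eq n (rh i @ rh j) (rh j @ rh i)"
| rr_inv: "1 \<le> i \<Longrightarrow> i < n \<Longrightarrow> vb_eq n (rh i @ rh i) []"
| sr_comm1: "1 \<le> i \<Longrightarrow> i < n \<Longrightarrow> 1 \<le> j \<Longrightarrow> j < n \<Longrightarrow> i + 2 \<le> j \<Longrightarrow>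
     vb_eq n (sg i @ rh j) (rh j @ sg i)"
| sr_comm2: "1 \<le> i \<Longrightarrow> i < n \<Longrightarrow> 1 \<le> j \<Longrightarrow> j < n \<Longrightarrow> j + 2 \<le> i \<Longrightarrow>
     vb_eq n (sg i @ rh j) (rh j @ sg i)"
| mixed: "1 \<le> i \<Longrightarrow> i + 2 \<le> n \<Longrightarrow>
     vb_eq n (rh i @ rh (i+1) @ sg i) (sg (i+1) @ rh i @ rh (i+1))"

definition vb_class :: "nat \<Rightarrow> vword \<Rightarrow> vword set" where
  "vb_class n w = {v. vb_eq n w v}"

definition vb_rep :: "vword set \<Rightarrow> vword" where
  "vb_rep X = (SOME w. w \<in> X)"

definition VB :: "nat \<Rightarrow> vword set monoid" where
  "VB n = \<lparr> carrier = vb_class n ` vb_words n,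
            mult = (\<lambda>X Y. vb_class n (vb_rep X @ vb_rep Y)),
            one = vb_class n [] \<rparr>"

definition sigma :: "nat \<Rightarrow> nat \<Rightarrow> vword set" where "sigma n i = vb_class n (sg i)"
definition rho :: "nat \<Rightarrow> nat \<Rightarrow> vword set" where "rho n i = vb_class n (rh i)"

definition nu_letter :: "vletter \<Rightarrow> nat \<Rightarrow> nat" where
  "nu_letter l = transpose (gidx (fst l)) (gidx (fst l) + 1)"

definition nu_word :: "vword \<Rightarrow> nat \<Rightarrow> nat" where
  "nu_word w = foldr (\<lambda>l f. nu_letter l \<circ> f) w id"

definition nu :: "vword set \<Rightarrow> nat \<Rightarrow> nat" where
  "nu X = nu_word (vb_rep X)"

definition VP_set :: "nat \<Rightarrow> vword set set" where
  "VP_set n = {X \<in> carrier (VB n). nu X = id}"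

definition VP :: "nat \<Rightarrow> vword set monoid" where
  "VP n = (VB n)\<lparr> carrier := VP_set n \<rparr>"

text \<open>The section s : S_n \<rightarrow> VB_n with s((i i+1)) = rho_i: s(pi) is the class of any
  word in the rho-generators whose image under nu is pi (well defined since the rho_i
  satisfy the Coxeter relations of S_n).\<close>
definition s_sec :: "nat \<Rightarrow> (nat \<Rightarrow> nat) \<Rightarrow> vword set" where
  "s_sec n p = vb_class n (SOME w. w \<in> vb_words n \<and> (\<forall>l\<in>set w. l = (Rh (gidx (fst l)), False))
                                 \<and> nu_word w = p)"

text \<open>Z[VP_n] \<otimes> Z[S_n] is identified (as a Z-module) with Z[VP_n \<times> S_n]: finitely
  supported integer functions on VP_n \<times> S_n; a \<otimes> b corresponds to (p,q) \<mapsto> a p * b q.\<close>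
definition tensor_carrier :: "nat \<Rightarrow> (vword set \<times> (nat \<Rightarrow> nat) \<Rightarrow> int) set" where
  "tensor_carrier n = {f. (\<forall>x. x \<notin> VP_set n \<times> carrier (sym_group n) \<longrightarrow> f x = 0)
                          \<and> finite {x. f x \<noteq> 0}}"

definition tensor :: "('a \<Rightarrow> int) \<Rightarrow> ('b \<Rightarrow> int) \<Rightarrow> ('a \<times> 'b \<Rightarrow> int)" where
  "tensor a b = (\<lambda>(x, y). a x * b y)"

inductive_set tensor_span :: "('a \<Rightarrow> int) set \<Rightarrow> ('b \<Rightarrow> int) set \<Rightarrow> ('a \<times> 'b \<Rightarrow> int) set"
  for A B where
  zero: "(\<lambda>x. 0) \<in> tensor_span A B"
| elem: "a \<in> A \<Longrightarrow> b \<in> B \<Longrightarrow> tensor a b \<in> tensor_span A B"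
| add: "f \<in> tensor_span A B \<Longrightarrow> g \<in> tensor_span A B \<Longrightarrow> (\<lambda>x. f x + g x) \<in> tensor_span A B"
| neg: "f \<in> tensor_span A B \<Longrightarrow> (\<lambda>x. - f x) \<in> tensor_span A B"

definition phi :: "nat \<Rightarrow> vword set \<Rightarrow> vword set \<times> (nat \<Rightarrow> nat)" where
  "phi n v = (v \<otimes>\<^bsub>VB n\<^esub> inv\<^bsub>VB n\<^esub> (s_sec n (nu v)), nu v)"

definition Omega :: "nat \<Rightarrow> (vword set \<Rightarrow> int) \<Rightarrow> (vword set \<times> (nat \<Rightarrow> nat) \<Rightarrow> int)" where
  "Omega n f = (\<lambda>x. \<Sum>v\<in>{v \<in> carrier (VB n). f v \<noteq> 0 \<and> phi n v = x}. f v)"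

definition J_ideal :: "nat \<Rightarrow> (vword set \<Rightarrow> int) set" where
  "J_ideal n = genideal (group_ring (VB n))
      {(\<lambda>x. delta (sigma n i) x - delta (rho n i) x) | i. 1 \<le> i \<and> i < n}"

end

theory Submission
  imports Defs
begin

definition gsupp :: "('a \<Rightarrow> int) \<Rightarrow> 'a set" where
  "gsupp f = {x. f x \<noteq> 0}"

lemma gr_carrier: "f \<in> carrier (group_ring G) \<longleftrightarrow> (\<forall>x. x \<notin> carrier G \<longrightarrow> f x = 0) \<and> finite (gsupp f)"
  by (simp add: group_ring_def gsupp_def)

lemma gr_mult: "f \<otimes>\<^bsub>group_ring G\<^esub> g = (\<lambda>x. if x \<in> carrier G
       then (\<Sum>y\<in>gsupp f. f y * g (inv\<^bsub>G\<^esub> y \<otimes>\<^bsub>G\<^esub> x)) else 0)"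
  unfolding group_ring_def gsupp_def by simp

lemma gr_add: "f \<oplus>\<^bsub>group_ring G\<^esub> g = (\<lambda>x. f x + g x)"
  by (simp add: group_ring_def)

lemma gr_zero: "\<zero>\<^bsub>group_ring G\<^esub> = (\<lambda>x. 0)"
  by (simp add: group_ring_def)

lemma gr_one: "\<one>\<^bsub>group_ring G\<^esub> = delta \<one>\<^bsub>G\<^esub>"
  by (simp add: group_ring_def delta_def)

lemma gsupp_delta[simp]: "gsupp (delta a) = {a}"
  by (auto simp: gsupp_def delta_def)

lemma gsupp_add: "gsupp (\<lambda>x. f x + g x) \<subseteq> gsupp f \<union> gsupp g"
  by (auto simp: gsupp_def)

context group
begin

abbreviation GR where "GR \<equiv> group_ring G"

lemma gr_carrierD: "f \<in> carrier GR \<Longrightarrow> x \<notin> carrier G \<Longrightarrow> f x = 0"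
  by (simp add: gr_carrier)

lemma gr_carrier_fin: "f \<in> carrier GR \<Longrightarrow> finite (gsupp f)"
  by (simp add: gr_carrier)

lemma gr_carrier_supp: "f \<in> carrier GR \<Longrightarrow> gsupp f \<subseteq> carrier G"
  by (auto simp: gr_carrier gsupp_def)

lemma conv_sup:
  assumes "finite S" "gsupp f \<subseteq> S" "x \<in> carrier G"
  shows "(f \<otimes>\<^bsub>GR\<^esub> g) x = (\<Sum>y\<in>S. f y * g (inv y \<otimes> x))"
proof -
  have "(f \<otimes>\<^bsub>GR\<^esub> g) x = (\<Sum>y\<in>gsupp f. f y * g (inv y \<otimes> x))"
    using assms by (simp add: gr_mult)
  also have "\<dots> = (\<Sum>y\<in>S. f y * g (inv y \<otimes> x))"
    by (rule sum.mono_neutral_left) (use assms in \<open>auto simp: gsupp_def\<close>)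
  finally show ?thesis .
qed

lemma gr_mult_out: "x \<notin> carrier G \<Longrightarrow> (f \<otimes>\<^bsub>GR\<^esub> g) x = 0"
  by (simp add: gr_mult)

lemma gsupp_mult:
  assumes f: "f \<in> carrier GR"
  shows "gsupp (f \<otimes>\<^bsub>GR\<^esub> g) \<subseteq> (\<lambda>(a,b). a \<otimes> b) ` (gsupp f \<times> gsupp g)"
proof
  fix x assume "x \<in> gsupp (f \<otimes>\<^bsub>GR\<^esub> g)"
  hence nz: "(f \<otimes>\<^bsub>GR\<^esub> g) x \<noteq> 0" by (simp add: gsupp_def)
  hence xG: "x \<in> carrier G" by (auto simp: gr_mult split: if_splits)
  with nz have "(\<Sum>y\<in>gsupp f. f y * g (inv y \<otimes> x)) \<noteq> 0" by (simp add: gr_mult)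
  then obtain y where y: "y \<in> gsupp f" "f y * g (inv y \<otimes> x) \<noteq> 0"
    by (meson sum.neutral)
  have yG: "y \<in> carrier G" using y(1) gr_carrier_supp[OF f] by auto
  have "inv y \<otimes> x \<in> gsupp g" using y(2) by (simp add: gsupp_def)
  moreover have "x = y \<otimes> (inv y \<otimes> x)" using xG yG by (simp add: m_assoc[symmetric])
  ultimately show "x \<in> (\<lambda>(a,b). a \<otimes> b) ` (gsupp f \<times> gsupp g)"
    using y(1) by (auto intro!: image_eqI[where x="(y, inv y \<otimes> x)"])
qed

lemma gr_mult_closed:
  assumes "f \<in> carrier GR" "g \<in> carrier GR"
  shows "f \<otimes>\<^bsub>GR\<^esub> g \<in> carrier GR"
proof -
  have "finite (gsupp (f \<otimes>\<^bsub>GR\<^esub> g))"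
    by (rule finite_subset[OF gsupp_mult[OF assms(1)]])
       (use assms in \<open>auto simp: gr_carrier\<close>)
  thus ?thesis by (simp add: gr_carrier gr_mult_out)
qed

lemma delta_carrier: "a \<in> carrier G \<Longrightarrow> delta a \<in> carrier GR"
  by (simp add: gr_carrier, auto simp: delta_def)

lemma gr_assoc:
  assumes f: "f \<in> carrier GR" and g: "g \<in> carrier GR" and h: "h \<in> carrier GR"
  shows "(f \<otimes>\<^bsub>GR\<^esub> g) \<otimes>\<^bsub>GR\<^esub> h = f \<otimes>\<^bsub>GR\<^esub> (g \<otimes>\<^bsub>GR\<^esub> h)"
proof
  fix x
  show "((f \<otimes>\<^bsub>GR\<^esub> g) \<otimes>\<^bsub>GR\<^esub> h) x = (f \<otimes>\<^bsub>GR\<^esub> (g \<otimes>\<^bsub>GR\<^esub> h)) x"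
  proof (cases "x \<in> carrier G")
    case False thus ?thesis by (simp add: gr_mult_out)
  next
    case xG: True
    define A where "A = gsupp f"
    define B where "B = gsupp g"
    define AB where "AB = (\<lambda>(a,b). a \<otimes> b) ` (A \<times> B)"
    have finA: "finite A" using f by (simp add: A_def gr_carrier)
    have finB: "finite B" using g by (simp add: B_def gr_carrier)
    have finAB: "finite AB" using finA finB by (simp add: AB_def)
    have AG: "A \<subseteq> carrier G" using f A_def gr_carrier_supp by blast
    have BG: "B \<subseteq> carrier G" using g B_def gr_carrier_supp by blast
    have ABG: "AB \<subseteq> carrier G" using AG BG by (auto simp: AB_def)
    have "((f \<otimes>\<^bsub>GR\<^esub> g) \<otimes>\<^bsub>GR\<^esub> h) x = (\<Sum>y\<in>AB. (f \<otimes>\<^bsub>GR\<^esub> g) y * h (inv y \<otimes> x))"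
      by (rule conv_sup[OF finAB _ xG]) (use gsupp_mult[OF f] in \<open>simp add: AB_def A_def B_def\<close>)
    also have "\<dots> = (\<Sum>y\<in>AB. (\<Sum>a\<in>A. f a * g (inv a \<otimes> y)) * h (inv y \<otimes> x))"
      by (rule sum.cong) (use ABG in \<open>auto simp: gr_mult A_def\<close>)
    also have "\<dots> = (\<Sum>a\<in>A. f a * (\<Sum>y\<in>AB. g (inv a \<otimes> y) * h (inv y \<otimes> x)))"
      by (simp add: sum_distrib_left sum_distrib_right sum.swap[of _ AB A] mult.assoc)
    also have "\<dots> = (\<Sum>a\<in>A. f a * (\<Sum>b\<in>B. g b * h (inv b \<otimes> (inv a \<otimes> x))))"
    proof (rule sum.cong[OF HOL.refl])
      fix a assume aA: "a \<in> A"
      have aG: "a \<in> carrier G" using aA AG by auto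
      have "(\<Sum>y\<in>AB. g (inv a \<otimes> y) * h (inv y \<otimes> x)) = (\<Sum>y\<in>(\<lambda>b. a \<otimes> b) ` B. g (inv a \<otimes> y) * h (inv y \<otimes> x))"
      proof (rule sum.mono_neutral_right[OF finAB])
        show "(\<lambda>b. a \<otimes> b) ` B \<subseteq> AB" using aA by (auto simp: AB_def)
        show "\<forall>i\<in>AB - (\<lambda>b. a \<otimes> b) ` B. g (inv a \<otimes> i) * h (inv i \<otimes> x) = 0"
        proof
          fix y assume y: "y \<in> AB - (\<lambda>b. a \<otimes> b) ` B"
          have yG: "y \<in> carrier G" using y ABG by auto
          have "inv a \<otimes> y \<notin> B"
          proof
            assume "inv a \<otimes> y \<in> B"
            moreover have "y = a \<otimes> (inv a \<otimes> y)" using aG yG by (simp add: m_assoc[symmetric])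
            ultimately show False using y by blast
          qed
          thus "g (inv a \<otimes> y) * h (inv y \<otimes> x) = 0" by (simp add: B_def gsupp_def)
        qed
      qed
      also have "\<dots> = (\<Sum>b\<in>B. g (inv a \<otimes> (a \<otimes> b)) * h (inv (a \<otimes> b) \<otimes> x))"
        by (rule sum.reindex_cong[where l="\<lambda>b. a \<otimes> b"]) (use aG BG in \<open>auto simp: inj_on_def, metis Units_eq Units_l_cancel subsetD\<close>)
      also have "\<dots> = (\<Sum>b\<in>B. g b * h (inv b \<otimes> (inv a \<otimes> x)))"
        by (rule sum.cong) (use aG BG xG in \<open>auto simp: m_assoc[symmetric] inv_mult_group\<close>)
      finally show "f a * (\<Sum>y\<in>AB. g (inv a \<otimes> y) * h (inv y \<otimes> x)) = f a * (\<Sum>b\<in>B. g b * h (inv b \<otimes> (inv a \<otimes> x)))"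
        by simp
    qed
    also have "\<dots> = (f \<otimes>\<^bsub>GR\<^esub> (g \<otimes>\<^bsub>GR\<^esub> h)) x"
      using xG AG by (auto simp: gr_mult A_def B_def intro!: sum.cong)
    finally show ?thesis .
  qed
qed


lemma gr_add_closed: "f \<in> carrier GR \<Longrightarrow> g \<in> carrier GR \<Longrightarrow> (\<lambda>x. f x + g x) \<in> carrier GR"
  unfolding gr_carrier by (auto intro: finite_subset[OF gsupp_add])

lemma gr_neg_closed: "f \<in> carrier GR \<Longrightarrow> (\<lambda>x. - f x) \<in> carrier GR"
  unfolding gr_carrier by (simp add: gsupp_def)

lemma gr_zero_closed: "(\<lambda>x. 0) \<in> carrier GR"
  unfolding gr_carrier by (simp add: gsupp_def)

lemma delta_mult_l:
  assumes "a \<in> carrier G"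
  shows "(delta a \<otimes>\<^bsub>GR\<^esub> f) x = (if x \<in> carrier G then f (inv a \<otimes> x) else 0)"
  by (simp add: gr_mult, simp add: delta_def)

lemma mult_delta_r:
  assumes a: "a \<in> carrier G" and f: "f \<in> carrier GR"
  shows "(f \<otimes>\<^bsub>GR\<^esub> delta a) x = (if x \<in> carrier G then f (x \<otimes> inv a) else 0)"
proof (cases "x \<in> carrier G")
  case True
  have fin: "finite (gsupp f)" using f by (simp add: gr_carrier)
  have "(f \<otimes>\<^bsub>GR\<^esub> delta a) x = (\<Sum>y\<in>gsupp f. f y * delta a (inv y \<otimes> x))"
    using True by (simp add: gr_mult)
  also have "\<dots> = (\<Sum>y\<in>gsupp f. if y = x \<otimes> inv a then f y else 0)"
  proof (rule sum.cong[OF HOL.refl])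
    fix y assume "y \<in> gsupp f"
    hence yG: "y \<in> carrier G" using gr_carrier_supp[OF f] by auto
    have "(inv y \<otimes> x = a) \<longleftrightarrow> (y = x \<otimes> inv a)"
      using yG True a by (metis group.inv_solve_left' group.inv_solve_right' group_axioms inv_closed inv_inv)
    thus "f y * delta a (inv y \<otimes> x) = (if y = x \<otimes> inv a then f y else 0)"
      by (simp add: delta_def)
  qed
  also have "\<dots> = f (x \<otimes> inv a)"
    using fin by (simp add: sum.delta gsupp_def)
  finally show ?thesis using True by simp
qed (simp add: gr_mult_out)

lemma delta_mult:
  assumes "a \<in> carrier G" "b \<in> carrier G"
  shows "delta a \<otimes>\<^bsub>GR\<^esub> delta b = delta (a \<otimes> b)"
proof
  fix x show "(delta a \<otimes>\<^bsub>GR\<^esub> delta b) x = delta (a \<otimes> b) x"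
    using assms by (simp add: delta_mult_l, auto simp: delta_def m_assoc[symmetric] inv_solve_left')
qed

lemma gr_l_one: "f \<in> carrier GR \<Longrightarrow> delta \<one> \<otimes>\<^bsub>GR\<^esub> f = f"
  by (rule ext) (simp add: delta_mult_l gr_carrierD)

lemma gr_r_one: "f \<in> carrier GR \<Longrightarrow> f \<otimes>\<^bsub>GR\<^esub> delta \<one> = f"
  by (rule ext) (simp add: mult_delta_r gr_carrierD)

lemma gr_l_distr:
  assumes f: "f \<in> carrier GR" and g: "g \<in> carrier GR" and h: "h \<in> carrier GR"
  shows "(\<lambda>x. f x + g x) \<otimes>\<^bsub>GR\<^esub> h = (\<lambda>x. (f \<otimes>\<^bsub>GR\<^esub> h) x + (g \<otimes>\<^bsub>GR\<^esub> h) x)"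
proof
  fix x show "((\<lambda>x. f x + g x) \<otimes>\<^bsub>GR\<^esub> h) x = (f \<otimes>\<^bsub>GR\<^esub> h) x + (g \<otimes>\<^bsub>GR\<^esub> h) x"
  proof (cases "x \<in> carrier G")
    case True
    define S where "S = gsupp f \<union> gsupp g"
    have finS: "finite S" using f g by (simp add: S_def gr_carrier)
    have "((\<lambda>x. f x + g x) \<otimes>\<^bsub>GR\<^esub> h) x = (\<Sum>y\<in>S. (f y + g y) * h (inv y \<otimes> x))"
      by (rule conv_sup[OF finS _ True]) (use gsupp_add[of f g] in \<open>simp add: S_def\<close>)
    also have "\<dots> = (\<Sum>y\<in>S. f y * h (inv y \<otimes> x)) + (\<Sum>y\<in>S. g y * h (inv y \<otimes> x))"
      by (simp add: distrib_right sum.distrib)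
    also have "\<dots> = (f \<otimes>\<^bsub>GR\<^esub> h) x + (g \<otimes>\<^bsub>GR\<^esub> h) x"
      using conv_sup[OF finS _ True, of f h] conv_sup[OF finS _ True, of g h] by (simp add: S_def)
    finally show ?thesis .
  qed (simp add: gr_mult_out)
qed

lemma gr_r_distr:
  shows "h \<otimes>\<^bsub>GR\<^esub> (\<lambda>x. f x + g x) = (\<lambda>x. (h \<otimes>\<^bsub>GR\<^esub> f) x + (h \<otimes>\<^bsub>GR\<^esub> g) x)"
  by (rule ext) (simp add: gr_mult distrib_left sum.distrib)

lemma ring_GR: "ring GR"
proof (rule ringI)
  show "abelian_group GR"
  proof (rule abelian_groupI)
    fix x assume x: "x \<in> carrier GR"
    show "\<exists>y\<in>carrier GR. y \<oplus>\<^bsub>GR\<^esub> x = \<zero>\<^bsub>GR\<^esub>"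
      by (rule bexI[of _ "\<lambda>a. - x a"]) (use x in \<open>simp_all add: gr_add gr_zero gr_neg_closed\<close>)
  qed (auto simp: gr_add gr_zero gr_add_closed gr_zero_closed add.assoc add.commute)
  show "monoid GR"
    by (rule monoidI) (auto simp: gr_one gr_mult_closed delta_carrier gr_assoc gr_l_one gr_r_one)
qed (simp_all add: gr_add gr_l_distr gr_r_distr)

lemma gr_a_inv: "f \<in> carrier GR \<Longrightarrow> \<ominus>\<^bsub>GR\<^esub> f = (\<lambda>x. - f x)"
  using ring_GR ring.is_abelian_group[OF ring_GR]
  by (intro abelian_group.minus_equality) (auto simp: gr_add gr_zero gr_neg_closed)

lemma gr_smul: "f \<in> carrier GR \<Longrightarrow> (\<lambda>x. c * delta \<one> x) \<otimes>\<^bsub>GR\<^esub> f = (\<lambda>x. c * f x)"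
  by (rule ext) (auto simp: gr_mult gsupp_def delta_def gr_carrierD)

end

context group
begin

lemma gr_ideal_add: "ideal I GR \<Longrightarrow> f \<in> I \<Longrightarrow> g \<in> I \<Longrightarrow> (\<lambda>x. f x + g x) \<in> I"
  using additive_subgroup.a_closed[OF ideal.axioms(1)] by (fastforce simp: gr_add)

lemma gr_ideal_zero: "ideal I GR \<Longrightarrow> (\<lambda>x. 0) \<in> I"
  using additive_subgroup.zero_closed[OF ideal.axioms(1)] by (fastforce simp: gr_zero)

lemma gr_ideal_neg: "ideal I GR \<Longrightarrow> f \<in> I \<Longrightarrow> (\<lambda>x. - f x) \<in> I"
  using additive_subgroup.a_inv_closed[OF ideal.axioms(1)] gr_a_inv ideal.Icarr
  by fastforce

lemma gr_ideal_diff: "ideal I GR \<Longrightarrow> f \<in> I \<Longrightarrow> g \<in> I \<Longrightarrow> (\<lambda>x. f x - g x) \<in> I"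
  using gr_ideal_add[of I f "\<lambda>x. - g x"] gr_ideal_neg[of I g] by simp

lemma gr_ideal_lmult: "ideal I GR \<Longrightarrow> f \<in> I \<Longrightarrow> r \<in> carrier GR \<Longrightarrow> r \<otimes>\<^bsub>GR\<^esub> f \<in> I"
  by (simp add: ideal.I_l_closed)

lemma gr_ideal_rmult: "ideal I GR \<Longrightarrow> f \<in> I \<Longrightarrow> r \<in> carrier GR \<Longrightarrow> f \<otimes>\<^bsub>GR\<^esub> r \<in> I"
  by (simp add: ideal.I_r_closed)

lemma gr_ideal_carrier: "ideal I GR \<Longrightarrow> f \<in> I \<Longrightarrow> f \<in> carrier GR"
  by (simp add: ideal.Icarr)

lemma gr_ideal_smul: "ideal I GR \<Longrightarrow> f \<in> I \<Longrightarrow> (\<lambda>x. c * f x) \<in> I"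
proof -
  assume I: "ideal I GR" and f: "f \<in> I"
  have "(\<lambda>x. c * delta \<one> x) \<in> carrier GR"
    by (simp add: gr_carrier gsupp_def delta_def)
  hence "(\<lambda>x. c * delta \<one> x) \<otimes>\<^bsub>GR\<^esub> f \<in> I" using I f by (simp add: gr_ideal_lmult)
  thus ?thesis using gr_smul[OF gr_ideal_carrier[OF I f]] by simp
qed

lemma gr_ideal_sum:
  assumes I: "ideal I GR" and fin: "finite A" and F: "\<And>i. i \<in> A \<Longrightarrow> F i \<in> I"
  shows "(\<lambda>x. \<Sum>i\<in>A. F i x) \<in> I"
  using fin F
proof (induction A rule: finite_induct)
  case empty thus ?case using gr_ideal_zero[OF I] by simp
next
  case (insert a A)
  have "(\<lambda>x. F a x + (\<Sum>i\<in>A. F i x)) \<in> I"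
    using insert by (intro gr_ideal_add[OF I]) auto
  thus ?case using insert by simp
qed

lemma gr_idealI:
  assumes sub: "I \<subseteq> carrier GR" and z: "(\<lambda>x. 0) \<in> I"
    and add: "\<And>f g. f \<in> I \<Longrightarrow> g \<in> I \<Longrightarrow> (\<lambda>x. f x + g x) \<in> I"
    and neg: "\<And>f. f \<in> I \<Longrightarrow> (\<lambda>x. - f x) \<in> I"
    and lm: "\<And>f r. f \<in> I \<Longrightarrow> r \<in> carrier GR \<Longrightarrow> r \<otimes>\<^bsub>GR\<^esub> f \<in> I"
    and rm: "\<And>f r. f \<in> I \<Longrightarrow> r \<in> carrier GR \<Longrightarrow> f \<otimes>\<^bsub>GR\<^esub> r \<in> I"
  shows "ideal I GR"
proof (rule idealI[OF ring_GR])
  show "subgroup I (add_monoid GR)"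
  proof (rule subgroup.intro)
    show "I \<subseteq> carrier (add_monoid GR)" using sub by simp
    show "\<And>x y. x \<in> I \<Longrightarrow> y \<in> I \<Longrightarrow> x \<otimes>\<^bsub>add_monoid GR\<^esub> y \<in> I"
      using add by (simp add: gr_add)
    show "\<one>\<^bsub>add_monoid GR\<^esub> \<in> I" using z by (simp add: gr_zero)
    show "\<And>x. x \<in> I \<Longrightarrow> inv\<^bsub>add_monoid GR\<^esub> x \<in> I"
      using neg sub gr_a_inv by (metis a_inv_def subsetD)
  qed
qed (use lm rm in auto)

lemma ideal_prod_carrier_eq:
  assumes "ideal K GR"
  shows "ideal_prod GR K (carrier GR) = K"
proof
  show "ideal_prod GR K (carrier GR) \<subseteq> K"
    using ring.ideal_prod_inter[OF ring_GR assms ring.oneideal[OF ring_GR]] by auto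
  show "K \<subseteq> ideal_prod GR K (carrier GR)"
  proof
    fix k assume k: "k \<in> K"
    have "k \<otimes>\<^bsub>GR\<^esub> \<one>\<^bsub>GR\<^esub> \<in> ideal_prod GR K (carrier GR)"
      by (rule ideal_prod.prod[OF k]) (simp add: gr_one delta_carrier)
    thus "k \<in> ideal_prod GR K (carrier GR)"
      using gr_r_one[OF gr_ideal_carrier[OF assms k]] by (simp add: gr_one)
  qed
qed

end

locale vsetting = group G for G (structure) +
  fixes S :: "('c, 'd) monoid_scheme" and H :: "'a set" and nu :: "'a \<Rightarrow> 'c" and s :: "'c \<Rightarrow> 'a"
  assumes S_group: "group S"
    and nu_hom: "nu \<in> hom G S"
    and H_def: "H = {x \<in> carrier G. nu x = \<one>\<^bsub>S\<^esub>}"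
    and s_closed: "p \<in> carrier S \<Longrightarrow> s p \<in> carrier G"
    and nu_s: "p \<in> carrier S \<Longrightarrow> nu (s p) = p"
begin

abbreviation Hs where "Hs \<equiv> G\<lparr>carrier := H\<rparr>"
abbreviation A where "A \<equiv> group_ring Hs"

lemma nu_group_hom: "group_hom G S nu"
  by (intro group_hom.intro group_hom_axioms.intro group_axioms S_group nu_hom)

lemma H_normal: "H \<lhd> G"
proof -
  have "kernel G S nu = H" unfolding kernel_def H_def by (rule HOL.refl)
  thus ?thesis using group_hom.normal_kernel[OF nu_group_hom] by simp
qed

lemma H_subgroup: "subgroup H G"
  using H_normal normal_imp_subgroup by blast

lemma H_sub: "H \<subseteq> carrier G" unfolding H_def by blast

lemma Hs_group: "group Hs"
  using subgroup_imp_group[OF H_subgroup] .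

lemma H_mult: "x \<in> H \<Longrightarrow> y \<in> H \<Longrightarrow> x \<otimes> y \<in> H"
  by (rule subgroup.m_closed[OF H_subgroup])

lemma H_inv: "x \<in> H \<Longrightarrow> inv x \<in> H"
  by (rule subgroup.m_inv_closed[OF H_subgroup])

lemma H_one: "\<one> \<in> H"
  by (rule subgroup.one_closed[OF H_subgroup])

lemma A_carrier: "f \<in> carrier A \<longleftrightarrow> f \<in> carrier GR \<and> gsupp f \<subseteq> H"
  using H_sub by (auto simp: gr_carrier gsupp_def)

lemma A_carrier_out: "f \<in> carrier A \<Longrightarrow> x \<notin> H \<Longrightarrow> f x = 0"
  by (simp add: gr_carrier)

lemma A_mult:
  assumes f: "f \<in> carrier A" and g: "g \<in> carrier A"
  shows "f \<otimes>\<^bsub>A\<^esub> g = f \<otimes>\<^bsub>GR\<^esub> g"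
proof
  fix x
  have fH: "gsupp f \<subseteq> H" using f A_carrier by blast
  show "(f \<otimes>\<^bsub>A\<^esub> g) x = (f \<otimes>\<^bsub>GR\<^esub> g) x"
  proof (cases "x \<in> H")
    case True
    have xG: "x \<in> carrier G" using True H_sub by auto
    have "(f \<otimes>\<^bsub>A\<^esub> g) x = (\<Sum>y\<in>gsupp f. f y * g (inv\<^bsub>Hs\<^esub> y \<otimes> x))"
      using True by (simp add: gr_mult)
    also have "\<dots> = (\<Sum>y\<in>gsupp f. f y * g (inv y \<otimes> x))"
    proof (rule sum.cong[OF HOL.refl])
      fix y assume "y \<in> gsupp f"
      hence "y \<in> H" using fH by auto
      thus "f y * g (inv\<^bsub>Hs\<^esub> y \<otimes> x) = f y * g (inv y \<otimes> x)"
        using m_inv_consistent[OF H_subgroup] by simp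
    qed
    also have "\<dots> = (f \<otimes>\<^bsub>GR\<^esub> g) x" using xG by (simp add: gr_mult)
    finally show ?thesis .
  next
    case False
    have "(f \<otimes>\<^bsub>GR\<^esub> g) x = 0"
    proof (cases "x \<in> carrier G")
      case xG: True
      have "(\<Sum>y\<in>gsupp f. f y * g (inv y \<otimes> x)) = 0"
      proof (rule sum.neutral, rule ballI)
        fix y assume y: "y \<in> gsupp f"
        hence yH: "y \<in> H" using fH by auto
        have "inv y \<otimes> x \<notin> H"
        proof
          assume "inv y \<otimes> x \<in> H"
          hence "y \<otimes> (inv y \<otimes> x) \<in> H" using yH H_mult by blast
          moreover have "y \<otimes> (inv y \<otimes> x) = x" using yH H_sub xG
            by (simp add: m_assoc[symmetric] subsetD)
          ultimately show False using False by simp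
        qed
        thus "f y * g (inv y \<otimes> x) = 0" using A_carrier_out[OF g] by simp
      qed
      thus ?thesis using xG by (simp add: gr_mult)
    qed (simp add: gr_mult_out)
    moreover have "(f \<otimes>\<^bsub>A\<^esub> g) x = 0" using False by (simp add: gr_mult)
    ultimately show ?thesis by simp
  qed
qed

lemma A_add: "f \<oplus>\<^bsub>A\<^esub> g = f \<oplus>\<^bsub>GR\<^esub> g" by (simp add: gr_add)
lemma A_one: "\<one>\<^bsub>A\<^esub> = \<one>\<^bsub>GR\<^esub>" by (simp add: gr_one)
lemma A_zero: "\<zero>\<^bsub>A\<^esub> = \<zero>\<^bsub>GR\<^esub>" by (simp add: gr_zero)

lemma ring_A: "ring A" using group.ring_GR[OF Hs_group] .

end

context group
begin

lemma gr_mult_rsum: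
  "f \<otimes>\<^bsub>GR\<^esub> (\<lambda>y. \<Sum>i\<in>I. F i y) = (\<lambda>y. \<Sum>i\<in>I. (f \<otimes>\<^bsub>GR\<^esub> F i) y)"
  by (rule ext) (auto simp: gr_mult sum_distrib_left intro: sum.swap)

lemma gr_mult_rsmul:
  "f \<otimes>\<^bsub>GR\<^esub> (\<lambda>y. c * F y) = (\<lambda>y. c * (f \<otimes>\<^bsub>GR\<^esub> F) y)"
  by (rule ext) (auto simp: gr_mult sum_distrib_left mult.left_commute)

lemma gr_expand: "f \<in> carrier GR \<Longrightarrow> f = (\<lambda>y. \<Sum>x\<in>gsupp f. f x * delta x y)"
proof
  fix y assume f: "f \<in> carrier GR"
  have "(\<Sum>x\<in>gsupp f. f x * delta x y) = (\<Sum>x\<in>gsupp f. if x = y then f y else 0)"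
    by (rule sum.cong) (auto simp: delta_def)
  also have "\<dots> = f y" using gr_carrier_fin[OF f] by (simp add: sum.delta' gsupp_def)
  finally show "f y = (\<Sum>x\<in>gsupp f. f x * delta x y)" by simp
qed

lemma gr_expand_r:
  assumes r: "r \<in> carrier GR"
  shows "f \<otimes>\<^bsub>GR\<^esub> r = (\<lambda>y. \<Sum>x\<in>gsupp r. r x * (f \<otimes>\<^bsub>GR\<^esub> delta x) y)"
proof -
  have "f \<otimes>\<^bsub>GR\<^esub> r = f \<otimes>\<^bsub>GR\<^esub> (\<lambda>y. \<Sum>x\<in>gsupp r. r x * delta x y)"
    using gr_expand[OF r] by simp
  also have "\<dots> = (\<lambda>y. \<Sum>x\<in>gsupp r. r x * (f \<otimes>\<^bsub>GR\<^esub> delta x) y)"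
    by (simp add: gr_mult_rsum gr_mult_rsmul)
  finally show ?thesis .
qed

lemma gr_expand_l:
  assumes r: "r \<in> carrier GR"
  shows "r \<otimes>\<^bsub>GR\<^esub> f = (\<lambda>y. \<Sum>x\<in>gsupp r. r x * (delta x \<otimes>\<^bsub>GR\<^esub> f) y)"
proof
  fix y
  have xs: "x \<in> carrier G" if "x \<in> gsupp r" for x using that gr_carrier_supp[OF r] by auto
  show "(r \<otimes>\<^bsub>GR\<^esub> f) y = (\<Sum>x\<in>gsupp r. r x * (delta x \<otimes>\<^bsub>GR\<^esub> f) y)"
    by (cases "y \<in> carrier G") (auto simp: gr_mult_out delta_mult_l xs intro!: sum.cong, simp add: gr_mult)
qed

lemma gr_sum_mult:
  assumes fin: "finite I" and F: "\<And>i. i \<in> I \<Longrightarrow> F i \<in> carrier GR" and y: "y \<in> carrier GR"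
  shows "(\<lambda>x. \<Sum>i\<in>I. F i x) \<otimes>\<^bsub>GR\<^esub> y = (\<lambda>x. \<Sum>i\<in>I. (F i \<otimes>\<^bsub>GR\<^esub> y) x)"
  using fin F
proof (induction I rule: finite_induct)
  case empty
  show ?case by (rule ext) (simp add: gr_mult gsupp_def)
next
  case (insert a I)
  have cI: "(\<lambda>x. \<Sum>i\<in>I. F i x) \<in> carrier GR"
    using gr_ideal_sum[OF ring.oneideal[OF ring_GR] insert(1)] insert(4) by auto
  have "(\<lambda>x. \<Sum>i\<in>insert a I. F i x) = (\<lambda>x. F a x + (\<Sum>i\<in>I. F i x))"
    using insert by simp
  hence "(\<lambda>x. \<Sum>i\<in>insert a I. F i x) \<otimes>\<^bsub>GR\<^esub> y =
      (\<lambda>x. (F a \<otimes>\<^bsub>GR\<^esub> y) x + ((\<lambda>x. \<Sum>i\<in>I. F i x) \<otimes>\<^bsub>GR\<^esub> y) x)"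
    using gr_l_distr[OF _ cI y, of "F a"] insert(4) by simp
  thus ?case using insert by simp
qed

lemma gr_neg_mult: "(\<lambda>x. - f x) \<otimes>\<^bsub>GR\<^esub> g = (\<lambda>x. - (f \<otimes>\<^bsub>GR\<^esub> g) x)"
  by (rule ext) (simp add: gr_mult gsupp_def sum_negf)

lemma gr_zero_mult: "(\<lambda>x. 0) \<otimes>\<^bsub>GR\<^esub> g = (\<lambda>x. 0)"
  by (rule ext) (simp add: gr_mult gsupp_def)

end


context vsetting
begin

definition res :: "('a \<Rightarrow> int) \<Rightarrow> 'a \<Rightarrow> int" where
  "res f = (\<lambda>x. if x \<in> H then f x else 0)"

definition E :: "('a \<Rightarrow> int) set \<Rightarrow> ('a \<Rightarrow> int) set" where
  "E M = {f \<in> carrier GR. \<forall>g\<in>carrier G. res (f \<otimes>\<^bsub>GR\<^esub> delta g) \<in> M}"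

definition cj :: "'a \<Rightarrow> ('a \<Rightarrow> int) \<Rightarrow> 'a \<Rightarrow> int" where
  "cj g a = delta g \<otimes>\<^bsub>GR\<^esub> a \<otimes>\<^bsub>GR\<^esub> delta (inv g)"

definition cstable :: "('a \<Rightarrow> int) set \<Rightarrow> bool" where
  "cstable M \<longleftrightarrow> (\<forall>g\<in>carrier G. \<forall>a\<in>M. cj g a \<in> M)"

lemma A_sub: "f \<in> carrier A \<Longrightarrow> f \<in> carrier GR"
  using A_carrier by blast

lemma res_carrier: "f \<in> carrier GR \<Longrightarrow> res f \<in> carrier A"
  unfolding A_carrier gr_carrier res_def gsupp_def
  by (auto intro: finite_subset[of _ "{x. f x \<noteq> 0}"])

lemma res_A: "f \<in> carrier A \<Longrightarrow> res f = f"
  by (rule ext) (simp add: res_def A_carrier_out)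

lemma delta_A: "h \<in> H \<Longrightarrow> delta h \<in> carrier A"
  using group.delta_carrier[OF Hs_group, of h] by simp

lemma res_lmult:
  assumes a: "a \<in> carrier A" and F: "F \<in> carrier GR"
  shows "res (a \<otimes>\<^bsub>GR\<^esub> F) = a \<otimes>\<^bsub>A\<^esub> res F"
proof
  fix x
  have aH: "gsupp a \<subseteq> H" using a A_carrier by blast
  show "res (a \<otimes>\<^bsub>GR\<^esub> F) x = (a \<otimes>\<^bsub>A\<^esub> res F) x"
  proof (cases "x \<in> H")
    case True
    have xG: "x \<in> carrier G" using True H_sub by auto
    have "(a \<otimes>\<^bsub>A\<^esub> res F) x = (\<Sum>y\<in>gsupp a. a y * res F (inv\<^bsub>Hs\<^esub> y \<otimes> x))"
      using True by (simp add: gr_mult)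
    also have "\<dots> = (\<Sum>y\<in>gsupp a. a y * F (inv y \<otimes> x))"
    proof (rule sum.cong[OF HOL.refl])
      fix y assume "y \<in> gsupp a"
      hence yH: "y \<in> H" using aH by auto
      hence "inv y \<otimes> x \<in> H" using H_mult H_inv True by blast
      thus "a y * res F (inv\<^bsub>Hs\<^esub> y \<otimes> x) = a y * F (inv y \<otimes> x)"
        using m_inv_consistent[OF H_subgroup yH] by (simp add: res_def)
    qed
    also have "\<dots> = (a \<otimes>\<^bsub>GR\<^esub> F) x" using xG by (simp add: gr_mult)
    finally show ?thesis using True by (simp add: res_def)
  next
    case False thus ?thesis by (simp add: res_def gr_mult)
  qed
qed

lemma res_rmult_delta:
  assumes k: "k \<in> H" and F: "F \<in> carrier GR"
  shows "res (F \<otimes>\<^bsub>GR\<^esub> delta k) = res F \<otimes>\<^bsub>A\<^esub> delta k"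
proof
  fix x
  have kG: "k \<in> carrier G" using k H_sub by auto
  have kHs: "k \<in> carrier Hs" using k by simp
  show "res (F \<otimes>\<^bsub>GR\<^esub> delta k) x = (res F \<otimes>\<^bsub>A\<^esub> delta k) x"
  proof (cases "x \<in> H")
    case True
    have "x \<otimes> inv k \<in> H" using True k H_mult H_inv by blast
    thus ?thesis
      using True H_sub group.mult_delta_r[OF Hs_group kHs res_carrier[OF F], of x]
        mult_delta_r[OF kG F, of x] m_inv_consistent[OF H_subgroup k]
      by (auto simp: res_def)
  next
    case False thus ?thesis
      using group.mult_delta_r[OF Hs_group kHs res_carrier[OF F], of x]
      by (simp add: res_def)
  qed
qed

lemma mult_delta_closed: "F \<in> carrier GR \<Longrightarrow> g \<in> carrier G \<Longrightarrow> F \<otimes>\<^bsub>GR\<^esub> delta g \<in> carrier GR"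
  by (simp add: gr_mult_closed delta_carrier)

lemma delta_mult_closed: "F \<in> carrier GR \<Longrightarrow> g \<in> carrier G \<Longrightarrow> delta g \<otimes>\<^bsub>GR\<^esub> F \<in> carrier GR"
  by (simp add: gr_mult_closed delta_carrier)

lemma cj_apply:
  assumes g: "g \<in> carrier G" and a: "a \<in> carrier GR"
  shows "cj g a x = (if x \<in> carrier G then a (inv g \<otimes> x \<otimes> g) else 0)"
  using mult_delta_r[OF inv_closed[OF g] delta_mult_closed[OF a g], of x] g
  by (auto simp: cj_def delta_mult_l m_assoc)

lemma cj_carrier: "g \<in> carrier G \<Longrightarrow> a \<in> carrier GR \<Longrightarrow> cj g a \<in> carrier GR"
  unfolding cj_def by (simp add: gr_mult_closed delta_carrier)

lemma cj_mult:
  assumes g: "g \<in> carrier G" and a: "a \<in> carrier GR" and b: "b \<in> carrier GR"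
  shows "cj g (a \<otimes>\<^bsub>GR\<^esub> b) = cj g a \<otimes>\<^bsub>GR\<^esub> cj g b"
proof -
  have dg: "delta g \<in> carrier GR" and dig: "delta (inv g) \<in> carrier GR"
    using g by (simp_all add: delta_carrier)
  have di: "delta (inv g) \<otimes>\<^bsub>GR\<^esub> delta g = delta \<one>"
    using g by (simp add: delta_mult)
  have "cj g a \<otimes>\<^bsub>GR\<^esub> cj g b
      = delta g \<otimes>\<^bsub>GR\<^esub> a \<otimes>\<^bsub>GR\<^esub> (delta (inv g) \<otimes>\<^bsub>GR\<^esub> delta g) \<otimes>\<^bsub>GR\<^esub> b \<otimes>\<^bsub>GR\<^esub> delta (inv g)"
    using a b dg dig by (simp add: cj_def gr_assoc gr_mult_closed)
  also have "\<dots> = cj g (a \<otimes>\<^bsub>GR\<^esub> b)"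
    using a b dg dig by (simp add: di gr_r_one cj_def gr_assoc gr_mult_closed)
  finally show ?thesis by simp
qed

lemma cj_add: "g \<in> carrier G \<Longrightarrow> a \<in> carrier GR \<Longrightarrow> b \<in> carrier GR \<Longrightarrow>
   cj g (\<lambda>x. a x + b x) = (\<lambda>x. cj g a x + cj g b x)"
  by (rule ext) (simp add: cj_apply gr_add_closed)

lemma cj_A: "g \<in> carrier G \<Longrightarrow> a \<in> carrier A \<Longrightarrow> cj g a \<in> carrier A"
proof -
  assume g: "g \<in> carrier G" and a: "a \<in> carrier A"
  have aG: "a \<in> carrier GR" using a A_sub by blast
  have "gsupp (cj g a) \<subseteq> H"
  proof
    fix x assume "x \<in> gsupp (cj g a)"
    hence nz: "cj g a x \<noteq> 0" by (simp add: gsupp_def)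
    hence xG: "x \<in> carrier G" using cj_apply[OF g aG] by (auto split: if_splits)
    hence "a (inv g \<otimes> x \<otimes> g) \<noteq> 0" using nz cj_apply[OF g aG] by simp
    hence "inv g \<otimes> x \<otimes> g \<in> H" using A_carrier_out[OF a] by blast
    hence "g \<otimes> (inv g \<otimes> x \<otimes> g) \<otimes> inv g \<in> H"
      using H_normal g by (metis inv_closed inv_inv normal_inv_iff)
    moreover have "g \<otimes> (inv g \<otimes> x \<otimes> g) \<otimes> inv g = x" using g xG
      by (simp add: m_assoc[symmetric]) (simp add: m_assoc)
    ultimately show "x \<in> H" by simp
  qed
  thus ?thesis using cj_carrier[OF g aG] A_carrier by blast
qed

lemma conj_H: "g \<in> carrier G \<Longrightarrow> h \<in> H \<Longrightarrow> g \<otimes> h \<otimes> inv g \<in> H"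
  using H_normal normal_inv_iff by blast

lemma res_cj:
  assumes g: "g \<in> carrier G" and K: "K \<in> carrier GR"
  shows "res (cj g K) = cj g (res K)"
proof
  fix x
  have rK: "res K \<in> carrier GR" using res_carrier[OF K] A_sub by blast
  show "res (cj g K) x = cj g (res K) x"
  proof (cases "x \<in> carrier G")
    case True
    have "x \<in> H \<longleftrightarrow> inv g \<otimes> x \<otimes> g \<in> H"
    proof
      assume "x \<in> H" thus "inv g \<otimes> x \<otimes> g \<in> H" using conj_H[of "inv g" x] g by simp
    next
      assume "inv g \<otimes> x \<otimes> g \<in> H"
      hence "g \<otimes> (inv g \<otimes> x \<otimes> g) \<otimes> inv g \<in> H" using conj_H g by blast
      moreover have "g \<otimes> (inv g \<otimes> x \<otimes> g) \<otimes> inv g = x" using g True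
        by (simp add: m_assoc[symmetric]) (simp add: m_assoc)
      ultimately show "x \<in> H" by simp
    qed
    thus ?thesis using True g unfolding cj_apply[OF g rK] by (simp add: res_def cj_apply[OF g K])
  next
    case False thus ?thesis using g unfolding cj_apply[OF g rK] by (simp add: res_def cj_apply[OF g K])
  qed
qed

lemma delta_mult_cj:
  assumes x: "x \<in> carrier G" and K: "K \<in> carrier GR"
  shows "delta x \<otimes>\<^bsub>GR\<^esub> K = cj x (K \<otimes>\<^bsub>GR\<^esub> delta x)"
proof
  fix y
  show "(delta x \<otimes>\<^bsub>GR\<^esub> K) y = cj x (K \<otimes>\<^bsub>GR\<^esub> delta x) y"
    using x by (simp add: delta_mult_l cj_apply[OF x mult_delta_closed[OF K x]] mult_delta_r[OF x K] m_assoc)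
qed

end

context vsetting
begin

lemmas A_ideal_add = group.gr_ideal_add[OF Hs_group]
lemmas A_ideal_zero = group.gr_ideal_zero[OF Hs_group]
lemmas A_ideal_neg = group.gr_ideal_neg[OF Hs_group]
lemmas A_ideal_smul = group.gr_ideal_smul[OF Hs_group]
lemmas A_ideal_sum = group.gr_ideal_sum[OF Hs_group]
lemmas A_ideal_carrier = group.gr_ideal_carrier[OF Hs_group]

lemma res_sum: "res (\<lambda>y. \<Sum>x\<in>X. c x * F x y) = (\<lambda>y. \<Sum>x\<in>X. c x * res (F x) y)"
  by (rule ext) (simp add: res_def)

lemma res_add: "res (\<lambda>y. F y + K y) = (\<lambda>y. res F y + res K y)"
  by (rule ext) (simp add: res_def)

lemma res_neg: "res (\<lambda>y. - F y) = (\<lambda>y. - res F y)"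
  by (rule ext) (simp add: res_def)

lemma res_zero: "res (\<lambda>y. 0) = (\<lambda>y. 0)"
  by (rule ext) (simp add: res_def)

lemma A_ideal_lin:
  assumes M: "ideal M A" and fin: "finite X" and F: "\<And>x. x \<in> X \<Longrightarrow> F x \<in> M"
  shows "(\<lambda>y. \<Sum>x\<in>X. c x * F x y) \<in> M"
  using A_ideal_sum[OF M fin, of "\<lambda>x y. c x * F x y"] A_ideal_smul[OF M F] by simp

lemma mem_E:
  assumes M: "ideal M A" and m: "m \<in> M"
  shows "m \<in> E M"
proof -
  have mA: "m \<in> carrier A" using A_ideal_carrier[OF M m] .
  have mG: "m \<in> carrier GR" using A_sub[OF mA] .
  have "res (m \<otimes>\<^bsub>GR\<^esub> delta g) \<in> M" if g: "g \<in> carrier G" for g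
  proof (cases "g \<in> H")
    case True
    have "res (m \<otimes>\<^bsub>GR\<^esub> delta g) = res m \<otimes>\<^bsub>A\<^esub> delta g"
      using res_rmult_delta[OF True mG] .
    also have "\<dots> = m \<otimes>\<^bsub>A\<^esub> delta g" using res_A[OF mA] by simp
    finally show ?thesis using ideal.I_r_closed[OF M m] delta_A[OF True] by simp
  next
    case False
    have "res (m \<otimes>\<^bsub>GR\<^esub> delta g) = (\<lambda>x. 0)"
    proof
      fix x
      show "res (m \<otimes>\<^bsub>GR\<^esub> delta g) x = 0"
      proof (cases "x \<in> H")
        case True
        have "x \<otimes> inv g \<notin> H"
        proof
          assume "x \<otimes> inv g \<in> H"
          hence "inv (x \<otimes> inv g) \<otimes> x \<in> H" using True H_inv H_mult by blast
          moreover have "inv (x \<otimes> inv g) \<otimes> x = g" using True H_sub g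
            by (simp add: inv_mult_group m_assoc subsetD)
          ultimately show False using False by simp
        qed
        thus ?thesis using True H_sub mult_delta_r[OF g mG, of x] A_carrier_out[OF mA]
          by (auto simp: res_def)
      qed (simp add: res_def)
    qed
    thus ?thesis using A_ideal_zero[OF M] by simp
  qed
  thus ?thesis using mG by (simp add: E_def)
qed

lemma E_carrier: "f \<in> E M \<Longrightarrow> f \<in> carrier GR"
  by (simp add: E_def)

lemma E_res: "f \<in> E M \<Longrightarrow> g \<in> carrier G \<Longrightarrow> res (f \<otimes>\<^bsub>GR\<^esub> delta g) \<in> M"
  by (simp add: E_def)

lemma E_ideal:
  assumes M: "ideal M A" and cs: "cstable M"
  shows "ideal (E M) GR"
proof (rule gr_idealI)
  show "E M \<subseteq> carrier GR" by (auto simp: E_def)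
  show "(\<lambda>x. 0) \<in> E M"
    using A_ideal_zero[OF M] by (simp add: E_def gr_zero_mult res_zero gr_zero_closed)
  show "(\<lambda>x. f x + g x) \<in> E M" if f: "f \<in> E M" and g: "g \<in> E M" for f g
  proof -
    have fc: "f \<in> carrier GR" and gc: "g \<in> carrier GR" using f g by (simp_all add: E_def)
    have "res ((\<lambda>x. f x + g x) \<otimes>\<^bsub>GR\<^esub> delta h) \<in> M" if h: "h \<in> carrier G" for h
      using A_ideal_add[OF M E_res[OF f h] E_res[OF g h]]
      by (simp add: gr_l_distr[OF fc gc delta_carrier[OF h]] res_add)
    thus ?thesis using gr_add_closed[OF fc gc] by (simp add: E_def)
  qed
  show "(\<lambda>x. - f x) \<in> E M" if f: "f \<in> E M" for f
  proof -
    have fc: "f \<in> carrier GR" using f by (simp add: E_def)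
    have "res ((\<lambda>x. - f x) \<otimes>\<^bsub>GR\<^esub> delta h) \<in> M" if h: "h \<in> carrier G" for h
      using A_ideal_neg[OF M E_res[OF f h]]
      by (simp add: gr_neg_mult res_neg)
    thus ?thesis using gr_neg_closed[OF fc] by (simp add: E_def)
  qed
  show "f \<otimes>\<^bsub>GR\<^esub> r \<in> E M" if f: "f \<in> E M" and r: "r \<in> carrier GR" for f r
  proof -
    have fc: "f \<in> carrier GR" using f by (simp add: E_def)
    have "res (f \<otimes>\<^bsub>GR\<^esub> r \<otimes>\<^bsub>GR\<^esub> delta g) \<in> M" if g: "g \<in> carrier G" for g
    proof -
      define rg where "rg = r \<otimes>\<^bsub>GR\<^esub> delta g"
      have rgc: "rg \<in> carrier GR" using r g by (simp add: rg_def mult_delta_closed)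
      have "f \<otimes>\<^bsub>GR\<^esub> r \<otimes>\<^bsub>GR\<^esub> delta g = f \<otimes>\<^bsub>GR\<^esub> rg"
        using fc r g by (simp add: rg_def gr_assoc delta_carrier)
      also have "\<dots> = (\<lambda>y. \<Sum>x\<in>gsupp rg. rg x * (f \<otimes>\<^bsub>GR\<^esub> delta x) y)"
        using gr_expand_r[OF rgc] .
      finally have eq: "res (f \<otimes>\<^bsub>GR\<^esub> r \<otimes>\<^bsub>GR\<^esub> delta g) = (\<lambda>y. \<Sum>x\<in>gsupp rg. rg x * res (f \<otimes>\<^bsub>GR\<^esub> delta x) y)"
        by (simp add: res_sum)
      show ?thesis unfolding eq
        by (rule A_ideal_lin[OF M gr_carrier_fin[OF rgc]])
           (use E_res[OF f] gr_carrier_supp[OF rgc] in blast)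
    qed
    thus ?thesis using gr_mult_closed[OF fc r] by (simp add: E_def)
  qed
  show "r \<otimes>\<^bsub>GR\<^esub> f \<in> E M" if f: "f \<in> E M" and r: "r \<in> carrier GR" for f r
  proof -
    have fc: "f \<in> carrier GR" using f by (simp add: E_def)
    have "res (r \<otimes>\<^bsub>GR\<^esub> f \<otimes>\<^bsub>GR\<^esub> delta g) \<in> M" if g: "g \<in> carrier G" for g
    proof -
      define K where "K = f \<otimes>\<^bsub>GR\<^esub> delta g"
      have Kc: "K \<in> carrier GR" using fc g by (simp add: K_def mult_delta_closed)
      have "r \<otimes>\<^bsub>GR\<^esub> f \<otimes>\<^bsub>GR\<^esub> delta g = r \<otimes>\<^bsub>GR\<^esub> K"
        using fc r g by (simp add: K_def gr_assoc delta_carrier)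
      also have "\<dots> = (\<lambda>y. \<Sum>x\<in>gsupp r. r x * (delta x \<otimes>\<^bsub>GR\<^esub> K) y)"
        using gr_expand_l[OF r] .
      finally have eq: "res (r \<otimes>\<^bsub>GR\<^esub> f \<otimes>\<^bsub>GR\<^esub> delta g) = (\<lambda>y. \<Sum>x\<in>gsupp r. r x * res (delta x \<otimes>\<^bsub>GR\<^esub> K) y)"
        by (simp add: res_sum)
      have "res (delta x \<otimes>\<^bsub>GR\<^esub> K) \<in> M" if x: "x \<in> gsupp r" for x
      proof -
        have xG: "x \<in> carrier G" using x gr_carrier_supp[OF r] by auto
        have "K \<otimes>\<^bsub>GR\<^esub> delta x = f \<otimes>\<^bsub>GR\<^esub> delta (g \<otimes> x)"
          using fc g xG by (simp add: K_def gr_assoc delta_carrier delta_mult)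
        hence "res (K \<otimes>\<^bsub>GR\<^esub> delta x) \<in> M" using E_res[OF f] g xG by simp
        hence "cj x (res (K \<otimes>\<^bsub>GR\<^esub> delta x)) \<in> M" using cs xG by (simp add: cstable_def)
        thus ?thesis
          by (simp add: delta_mult_cj[OF xG Kc] res_cj[OF xG mult_delta_closed[OF Kc xG]])
      qed
      thus ?thesis unfolding eq
        by (intro A_ideal_lin[OF M gr_carrier_fin[OF r]])
    qed
    thus ?thesis using gr_mult_closed[OF r fc] by (simp add: E_def)
  qed
qed

lemma nu_eq_iff:
  assumes y: "y \<in> carrier G" and r: "r \<in> carrier G"
  shows "y \<otimes> inv r \<in> H \<longleftrightarrow> nu y = nu r"
proof -
  interpret h: group_hom G S nu by (rule nu_group_hom)
  have "nu (y \<otimes> inv r) = nu y \<otimes>\<^bsub>S\<^esub> inv\<^bsub>S\<^esub> nu r" using y r by simp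
  moreover have "nu y \<otimes>\<^bsub>S\<^esub> inv\<^bsub>S\<^esub> nu r = \<one>\<^bsub>S\<^esub> \<longleftrightarrow> nu y = nu r"
  proof
    assume a: "nu y \<otimes>\<^bsub>S\<^esub> inv\<^bsub>S\<^esub> nu r = \<one>\<^bsub>S\<^esub>"
    have "nu y = nu y \<otimes>\<^bsub>S\<^esub> inv\<^bsub>S\<^esub> nu r \<otimes>\<^bsub>S\<^esub> nu r"
      using y r by (simp add: h.H.m_assoc)
    thus "nu y = nu r" using a r by simp
  next
    assume "nu y = nu r" thus "nu y \<otimes>\<^bsub>S\<^esub> inv\<^bsub>S\<^esub> nu r = \<one>\<^bsub>S\<^esub>" using r by simp
  qed
  ultimately show ?thesis using y r by (simp add: H_def)
qed

lemma nu_closed: "x \<in> carrier G \<Longrightarrow> nu x \<in> carrier S"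
  by (rule hom_in_carrier[OF nu_hom])

lemma decomp:
  assumes f: "f \<in> carrier GR"
  shows "f = (\<lambda>y. \<Sum>r\<in>(\<lambda>z. s (nu z)) ` gsupp f. (res (f \<otimes>\<^bsub>GR\<^esub> delta (inv r)) \<otimes>\<^bsub>GR\<^esub> delta r) y)"
proof
  fix y
  define T where "T = (\<lambda>z. s (nu z)) ` gsupp f"
  have TG: "T \<subseteq> carrier G" using gr_carrier_supp[OF f] s_closed nu_closed by (auto simp: T_def)
  have finT: "finite T" using gr_carrier_fin[OF f] by (simp add: T_def)
  have trm: "(res (f \<otimes>\<^bsub>GR\<^esub> delta (inv r)) \<otimes>\<^bsub>GR\<^esub> delta r) y =
      (if y \<in> carrier G \<and> nu y = nu r then f y else 0)" if rT: "r \<in> T" for r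
  proof -
    have rG: "r \<in> carrier G" using rT TG by auto
    have rc: "res (f \<otimes>\<^bsub>GR\<^esub> delta (inv r)) \<in> carrier GR"
      using res_carrier[OF mult_delta_closed[OF f inv_closed[OF rG]]] A_sub by blast
    show ?thesis
    proof (cases "y \<in> carrier G")
      case True
      have "(res (f \<otimes>\<^bsub>GR\<^esub> delta (inv r)) \<otimes>\<^bsub>GR\<^esub> delta r) y = res (f \<otimes>\<^bsub>GR\<^esub> delta (inv r)) (y \<otimes> inv r)"
        using mult_delta_r[OF rG rc, of y] True by simp
      also have "\<dots> = (if y \<otimes> inv r \<in> H then f y else 0)"
        using mult_delta_r[OF inv_closed[OF rG] f, of "y \<otimes> inv r"] True rG
        by (simp add: res_def m_assoc)
      finally show ?thesis using nu_eq_iff[OF True rG] True by simp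
    qed (simp add: gr_mult_out)
  qed
  show "f y = (\<Sum>r\<in>T. (res (f \<otimes>\<^bsub>GR\<^esub> delta (inv r)) \<otimes>\<^bsub>GR\<^esub> delta r) y)"
  proof (cases "f y = 0")
    case True
    have "\<forall>r\<in>T. (res (f \<otimes>\<^bsub>GR\<^esub> delta (inv r)) \<otimes>\<^bsub>GR\<^esub> delta r) y = 0"
      using trm True by simp
    thus ?thesis using True by (simp add: sum.neutral)
  next
    case False
    have yG: "y \<in> carrier G"
    proof (rule ccontr)
      assume "y \<notin> carrier G" thus False using gr_carrierD[OF f] False by simp
    qed
    have ysupp: "y \<in> gsupp f" using False by (simp add: gsupp_def)
    have "(\<Sum>r\<in>T. (res (f \<otimes>\<^bsub>GR\<^esub> delta (inv r)) \<otimes>\<^bsub>GR\<^esub> delta r) y)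
        = (\<Sum>r\<in>T. if r = s (nu y) then f y else 0)"
    proof (rule sum.cong[OF HOL.refl])
      fix r assume rT: "r \<in> T"
      then obtain z where z: "z \<in> gsupp f" "r = s (nu z)" by (auto simp: T_def)
      have zG: "z \<in> carrier G" using z gr_carrier_supp[OF f] by auto
      have "nu r = nu z" using z nu_s nu_closed[OF zG] by simp
      have "nu y = nu r \<longleftrightarrow> r = s (nu y)"
      proof
        assume "nu y = nu r"
        thus "r = s (nu y)" using z(2) \<open>nu r = nu z\<close> by simp
      next
        assume "r = s (nu y)"
        thus "nu y = nu r" using nu_s[OF nu_closed[OF yG]] by simp
      qed
      thus "(res (f \<otimes>\<^bsub>GR\<^esub> delta (inv r)) \<otimes>\<^bsub>GR\<^esub> delta r) y = (if r = s (nu y) then f y else 0)"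
        using trm[OF rT] yG by simp
    qed
    also have "\<dots> = f y"
    proof -
      have "s (nu y) \<in> T" unfolding T_def using ysupp by (rule imageI)
      thus ?thesis using finT by (simp add: sum.delta)
    qed
    finally show ?thesis by simp
  qed
qed

end

context vsetting
begin

abbreviation Iaug where "Iaug \<equiv> aug_ideal Hs"

definition gens where "gens = {(\<lambda>x. delta g x - delta \<one> x) | g. g \<in> H}"

lemma aug_eq: "Iaug = genideal A gens"
  by (simp add: aug_ideal_def gens_def)

lemma gens_sub: "gens \<subseteq> carrier A"
proof
  fix f assume "f \<in> gens"
  then obtain g where g: "g \<in> H" "f = (\<lambda>x. delta g x - delta \<one> x)" by (auto simp: gens_def)
  show "f \<in> carrier A"
    using group.gr_ideal_diff[OF Hs_group ring.oneideal[OF ring_A] delta_A[OF g(1)] delta_A[OF H_one]] g(2)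
    by simp
qed

lemma aug_ideal': "ideal Iaug A"
  unfolding aug_eq by (rule ring.genideal_ideal[OF ring_A gens_sub])

lemma aug_gen: "h \<in> H \<Longrightarrow> (\<lambda>x. delta h x - delta \<one> x) \<in> Iaug"
  using ring.genideal_self[OF ring_A gens_sub] unfolding aug_eq gens_def by blast

lemma aug_min: "ideal K A \<Longrightarrow> gens \<subseteq> K \<Longrightarrow> Iaug \<subseteq> K"
  unfolding aug_eq by (rule ring.genideal_minimal[OF ring_A])

lemma cj_delta: "g \<in> carrier G \<Longrightarrow> h \<in> carrier G \<Longrightarrow> cj g (delta h) = delta (g \<otimes> h \<otimes> inv g)"
  by (simp add: cj_def delta_mult)

lemma cj_diff: "g \<in> carrier G \<Longrightarrow> a \<in> carrier GR \<Longrightarrow> b \<in> carrier GR \<Longrightarrow>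
   cj g (\<lambda>x. a x - b x) = (\<lambda>x. cj g a x - cj g b x)"
proof -
  assume g: "g \<in> carrier G" and a: "a \<in> carrier GR" and b: "b \<in> carrier GR"
  have c: "(\<lambda>x. a x - b x) \<in> carrier GR"
    using gr_ideal_diff[OF ring.oneideal[OF ring_GR] a b] .
  show ?thesis by (rule ext) (simp add: cj_apply[OF g c] cj_apply[OF g a] cj_apply[OF g b])
qed

lemma cj_neg: "g \<in> carrier G \<Longrightarrow> a \<in> carrier GR \<Longrightarrow> cj g (\<lambda>x. - a x) = (\<lambda>x. - cj g a x)"
  by (rule ext) (simp add: cj_apply gr_neg_closed)

lemma cj_zero: "g \<in> carrier G \<Longrightarrow> cj g (\<lambda>x. 0) = (\<lambda>x. 0)"
  by (rule ext) (simp add: cj_apply gr_zero_closed)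

lemma cs_aug: "cstable Iaug"
  unfolding cstable_def
proof (intro ballI)
  fix g a assume g: "g \<in> carrier G" and a: "a \<in> Iaug"
  define P where "P = {a \<in> carrier A. cj g a \<in> Iaug}"
  have I: "ideal Iaug A" by (rule aug_ideal')
  have "ideal P A"
  proof (rule group.gr_idealI[OF Hs_group])
    show "P \<subseteq> carrier A" by (auto simp: P_def)
    show "(\<lambda>x. 0) \<in> P" using g A_ideal_zero[OF I] group.gr_zero_closed[OF Hs_group]
      by (simp add: P_def cj_zero)
    show "(\<lambda>x. f x + h x) \<in> P" if "f \<in> P" "h \<in> P" for f h
      using that g A_ideal_add[OF I] group.gr_add_closed[OF Hs_group]
      by (simp add: P_def cj_add A_sub)
    show "(\<lambda>x. - f x) \<in> P" if "f \<in> P" for f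
      using that g A_ideal_neg[OF I] group.gr_neg_closed[OF Hs_group]
      by (simp add: P_def cj_neg A_sub)
    show "r \<otimes>\<^bsub>A\<^esub> f \<in> P" if f: "f \<in> P" and r: "r \<in> carrier A" for f r
    proof -
      have fA: "f \<in> carrier A" and cf: "cj g f \<in> Iaug" using f by (auto simp: P_def)
      have "cj g (r \<otimes>\<^bsub>A\<^esub> f) = cj g r \<otimes>\<^bsub>A\<^esub> cj g f"
        using A_mult[OF r fA] A_mult[OF cj_A[OF g r] cj_A[OF g fA]] cj_mult[OF g A_sub[OF r] A_sub[OF fA]]
        by simp
      moreover have "cj g r \<otimes>\<^bsub>A\<^esub> cj g f \<in> Iaug"
        using ideal.I_l_closed[OF I cf cj_A[OF g r]] .
      ultimately show ?thesis using group.gr_mult_closed[OF Hs_group r fA] by (simp add: P_def)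
    qed
    show "f \<otimes>\<^bsub>A\<^esub> r \<in> P" if f: "f \<in> P" and r: "r \<in> carrier A" for f r
    proof -
      have fA: "f \<in> carrier A" and cf: "cj g f \<in> Iaug" using f by (auto simp: P_def)
      have "cj g (f \<otimes>\<^bsub>A\<^esub> r) = cj g f \<otimes>\<^bsub>A\<^esub> cj g r"
        using A_mult[OF fA r] A_mult[OF cj_A[OF g fA] cj_A[OF g r]] cj_mult[OF g A_sub[OF fA] A_sub[OF r]]
        by simp
      moreover have "cj g f \<otimes>\<^bsub>A\<^esub> cj g r \<in> Iaug"
        using ideal.I_r_closed[OF I cf cj_A[OF g r]] .
      ultimately show ?thesis using group.gr_mult_closed[OF Hs_group fA r] by (simp add: P_def)
    qed
  qed
  moreover have "gens \<subseteq> P"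
  proof
    fix f assume "f \<in> gens"
    then obtain h where h: "h \<in> H" "f = (\<lambda>x. delta h x - delta \<one> x)" by (auto simp: gens_def)
    have hG: "h \<in> carrier G" using h H_sub by auto
    have "cj g f = (\<lambda>x. delta (g \<otimes> h \<otimes> inv g) x - delta \<one> x)"
      using h(2) g hG by (simp add: cj_diff delta_carrier cj_delta)
    moreover have "g \<otimes> h \<otimes> inv g \<in> H" using conj_H[OF g h(1)] .
    ultimately have "cj g f \<in> Iaug" using aug_gen by simp
    thus "f \<in> P" using gens_sub \<open>f \<in> gens\<close> by (auto simp: P_def)
  qed
  ultimately have "Iaug \<subseteq> P" by (rule aug_min)
  thus "cj g a \<in> Iaug" using a by (auto simp: P_def)
qed

lemma cs_prod:
  assumes I: "ideal I A" and M: "ideal M A" and cI: "cstable I" and cM: "cstable M"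
  shows "cstable (ideal_prod A I M)"
  unfolding cstable_def
proof (intro ballI)
  fix g c assume g: "g \<in> carrier G" and c: "c \<in> ideal_prod A I M"
  from c show "cj g c \<in> ideal_prod A I M"
  proof (induction c rule: ideal_prod.induct)
    case (prod i j)
    have iA: "i \<in> carrier A" and jA: "j \<in> carrier A"
      using prod A_ideal_carrier I M by auto
    have "cj g (i \<otimes>\<^bsub>A\<^esub> j) = cj g i \<otimes>\<^bsub>A\<^esub> cj g j"
      using A_mult[OF iA jA] A_mult[OF cj_A[OF g iA] cj_A[OF g jA]] cj_mult[OF g A_sub[OF iA] A_sub[OF jA]]
      by simp
    moreover have "cj g i \<in> I" "cj g j \<in> M" using cI cM g prod by (auto simp: cstable_def)
    ultimately show ?case by (simp add: ideal_prod.prod)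
  next
    case (sum s1 s2)
    have s1A: "s1 \<in> carrier A" and s2A: "s2 \<in> carrier A"
      using sum(1,2) ring.ideal_prod_in_carrier[OF ring_A I M] by auto
    have "cj g (s1 \<oplus>\<^bsub>A\<^esub> s2) = cj g s1 \<oplus>\<^bsub>A\<^esub> cj g s2"
      using g by (simp add: gr_add cj_add A_sub[OF s1A] A_sub[OF s2A])
    thus ?case using sum(3,4) by (simp add: ideal_prod.sum)
  qed
qed

lemma delta_diff_mult:
  assumes a: "a \<in> carrier G" and b: "b \<in> carrier G" and g: "g \<in> carrier G"
  shows "(\<lambda>x. delta a x - delta b x) \<otimes>\<^bsub>GR\<^esub> delta g = (\<lambda>x. delta (a \<otimes> g) x - delta (b \<otimes> g) x)"
proof
  fix x
  have c: "(\<lambda>x. delta a x - delta b x) \<in> carrier GR"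
    using gr_ideal_diff[OF ring.oneideal[OF ring_GR] delta_carrier[OF a] delta_carrier[OF b]] .
  show "((\<lambda>x. delta a x - delta b x) \<otimes>\<^bsub>GR\<^esub> delta g) x = delta (a \<otimes> g) x - delta (b \<otimes> g) x"
  proof (cases "x \<in> carrier G")
    case True
    have e1: "x \<otimes> inv g = a \<longleftrightarrow> x = a \<otimes> g" using inv_solve_right'[OF a True g] .
    have e2: "x \<otimes> inv g = b \<longleftrightarrow> x = b \<otimes> g" using inv_solve_right'[OF b True g] .
    show ?thesis using mult_delta_r[OF g c, of x] True e1 e2 by (simp add: delta_def)
  next
    case False
    have "a \<otimes> g \<noteq> x" "b \<otimes> g \<noteq> x" using False a b g by auto
    thus ?thesis using False by (simp add: gr_mult_out delta_def)
  qed
qed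

lemma E_aug_gen:
  assumes a: "a \<in> carrier G" and b: "b \<in> carrier G" and ab: "a \<otimes> inv b \<in> H"
  shows "(\<lambda>x. delta a x - delta b x) \<in> E Iaug"
proof -
  have c: "(\<lambda>x. delta a x - delta b x) \<in> carrier GR"
    using gr_ideal_diff[OF ring.oneideal[OF ring_GR] delta_carrier[OF a] delta_carrier[OF b]] .
  have "res ((\<lambda>x. delta a x - delta b x) \<otimes>\<^bsub>GR\<^esub> delta g) \<in> Iaug" if g: "g \<in> carrier G" for g
  proof -
    have agG: "a \<otimes> g \<in> carrier G" and bgG: "b \<otimes> g \<in> carrier G" using a b g by auto
    have rel: "a \<otimes> g = (a \<otimes> inv b) \<otimes> (b \<otimes> g)" using a b g by (simp add: m_assoc[symmetric]) (simp add: m_assoc)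
    have rel2: "b \<otimes> g = inv (a \<otimes> inv b) \<otimes> (a \<otimes> g)" using a b g
      by (simp add: m_assoc[symmetric] inv_mult_group) (simp add: m_assoc)
    show ?thesis
    proof (cases "b \<otimes> g \<in> H")
      case True
      have agH: "a \<otimes> g \<in> H" using rel H_mult[OF ab True] by simp
      have "res ((\<lambda>x. delta a x - delta b x) \<otimes>\<^bsub>GR\<^esub> delta g)
          = (\<lambda>x. (delta (a \<otimes> g) x - delta \<one> x) - (delta (b \<otimes> g) x - delta \<one> x))"
        unfolding delta_diff_mult[OF a b g] using True agH by (auto simp: res_def delta_def)
      thus ?thesis using group.gr_ideal_diff[OF Hs_group aug_ideal' aug_gen[OF agH] aug_gen[OF True]]
        by simp
    next
      case False
      have agH: "a \<otimes> g \<notin> H"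
      proof
        assume "a \<otimes> g \<in> H"
        hence "inv (a \<otimes> inv b) \<otimes> (a \<otimes> g) \<in> H" using H_mult H_inv ab by blast
        thus False using rel2 False by simp
      qed
      have "res ((\<lambda>x. delta a x - delta b x) \<otimes>\<^bsub>GR\<^esub> delta g) = (\<lambda>x. 0)"
        unfolding delta_diff_mult[OF a b g] using False agH by (auto simp: res_def delta_def)
      thus ?thesis using A_ideal_zero[OF aug_ideal'] by simp
    qed
  qed
  thus ?thesis using c by (simp add: E_def)
qed

end

context vsetting
begin

lemma decomp_T_fin: "f \<in> carrier GR \<Longrightarrow> finite ((\<lambda>z. s (nu z)) ` gsupp f)"
  using gr_carrier_fin by blast

lemma decomp_T_G: "f \<in> carrier GR \<Longrightarrow> r \<in> (\<lambda>z. s (nu z)) ` gsupp f \<Longrightarrow> r \<in> carrier G"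
proof -
  assume f: "f \<in> carrier GR" and r: "r \<in> (\<lambda>z. s (nu z)) ` gsupp f"
  then obtain z where z: "z \<in> gsupp f" "r = s (nu z)" by blast
  have "z \<in> carrier G" using z(1) gr_carrier_supp[OF f] by auto
  thus ?thesis using z(2) s_closed nu_closed by simp
qed

lemma ideal_restrict_A:
  assumes J: "ideal J GR"
  shows "ideal (J \<inter> carrier A) A"
proof (rule group.gr_idealI[OF Hs_group])
  show "J \<inter> carrier A \<subseteq> carrier A" by auto
  show "(\<lambda>x. 0) \<in> J \<inter> carrier A" using gr_ideal_zero[OF J] group.gr_zero_closed[OF Hs_group] by simp
  show "(\<lambda>x. f x + g x) \<in> J \<inter> carrier A" if "f \<in> J \<inter> carrier A" "g \<in> J \<inter> carrier A" for f g
    using that gr_ideal_add[OF J] group.gr_add_closed[OF Hs_group] by auto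
  show "(\<lambda>x. - f x) \<in> J \<inter> carrier A" if "f \<in> J \<inter> carrier A" for f
    using that gr_ideal_neg[OF J] group.gr_neg_closed[OF Hs_group] by auto
  show "r \<otimes>\<^bsub>A\<^esub> f \<in> J \<inter> carrier A" if f: "f \<in> J \<inter> carrier A" and r: "r \<in> carrier A" for f r
    using A_mult[OF r, of f] f gr_ideal_lmult[OF J, of f r] A_sub[OF r] group.gr_mult_closed[OF Hs_group r, of f]
    by auto
  show "f \<otimes>\<^bsub>A\<^esub> r \<in> J \<inter> carrier A" if f: "f \<in> J \<inter> carrier A" and r: "r \<in> carrier A" for f r
    using A_mult[OF _ r, of f] f gr_ideal_rmult[OF J, of f r] A_sub[OF r] group.gr_mult_closed[OF Hs_group _ r, of f]
    by auto
qed

lemma J_eq: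
  assumes J: "ideal J GR" and JE: "J \<subseteq> E Iaug"
    and gen: "\<And>h. h \<in> H \<Longrightarrow> (\<lambda>x. delta h x - delta \<one> x) \<in> J"
  shows "J = E Iaug"
proof
  show "J \<subseteq> E Iaug" by (rule JE)
  have augJ: "Iaug \<subseteq> J"
  proof -
    have "Iaug \<subseteq> J \<inter> carrier A"
      by (rule aug_min[OF ideal_restrict_A[OF J]]) (use gen gens_sub in \<open>auto simp: gens_def\<close>)
    thus ?thesis by auto
  qed
  show "E Iaug \<subseteq> J"
  proof
    fix f assume f: "f \<in> E Iaug"
    have fc: "f \<in> carrier GR" using f by (simp add: E_def)
    have "(\<lambda>y. \<Sum>r\<in>(\<lambda>z. s (nu z)) ` gsupp f. (res (f \<otimes>\<^bsub>GR\<^esub> delta (inv r)) \<otimes>\<^bsub>GR\<^esub> delta r) y) \<in> J"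
    proof (rule gr_ideal_sum[OF J decomp_T_fin[OF fc]])
      fix r assume r: "r \<in> (\<lambda>z. s (nu z)) ` gsupp f"
      have rG: "r \<in> carrier G" using decomp_T_G[OF fc r] .
      have "res (f \<otimes>\<^bsub>GR\<^esub> delta (inv r)) \<in> J" using E_res[OF f inv_closed[OF rG]] augJ by auto
      thus "res (f \<otimes>\<^bsub>GR\<^esub> delta (inv r)) \<otimes>\<^bsub>GR\<^esub> delta r \<in> J"
        using gr_ideal_rmult[OF J] delta_carrier[OF rG] by blast
    qed
    thus "f \<in> J" using decomp[OF fc] by simp
  qed
qed

lemma prod_E:
  assumes I: "ideal I A" and M: "ideal M A" and cI: "cstable I" and cM: "cstable M"
  shows "ideal_prod GR (E I) (E M) = E (ideal_prod A I M)"
proof -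
  define IM where "IM = ideal_prod A I M"
  have IMi: "ideal IM A" unfolding IM_def by (rule ring.ideal_prod_is_ideal[OF ring_A I M])
  have IMc: "cstable IM" unfolding IM_def by (rule cs_prod[OF I M cI cM])
  have EIM: "ideal (E IM) GR" by (rule E_ideal[OF IMi IMc])
  have EI: "ideal (E I) GR" by (rule E_ideal[OF I cI])
  have EM: "ideal (E M) GR" by (rule E_ideal[OF M cM])
  have aux1: "a \<otimes>\<^bsub>GR\<^esub> z \<in> E IM" if a: "a \<in> I" and z: "z \<in> E M" for a z
  proof -
    have aA: "a \<in> carrier A" using A_ideal_carrier[OF I a] .
    have zc: "z \<in> carrier GR" using z by (simp add: E_def)
    have "res (a \<otimes>\<^bsub>GR\<^esub> z \<otimes>\<^bsub>GR\<^esub> delta g) \<in> IM" if g: "g \<in> carrier G" for g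
    proof -
      have "a \<otimes>\<^bsub>GR\<^esub> z \<otimes>\<^bsub>GR\<^esub> delta g = a \<otimes>\<^bsub>GR\<^esub> (z \<otimes>\<^bsub>GR\<^esub> delta g)"
        using A_sub[OF aA] zc g by (simp add: gr_assoc delta_carrier)
      hence "res (a \<otimes>\<^bsub>GR\<^esub> z \<otimes>\<^bsub>GR\<^esub> delta g) = a \<otimes>\<^bsub>A\<^esub> res (z \<otimes>\<^bsub>GR\<^esub> delta g)"
        using res_lmult[OF aA mult_delta_closed[OF zc g]] by simp
      thus ?thesis using ideal_prod.prod[OF a E_res[OF z g]] by (simp add: IM_def)
    qed
    thus ?thesis using gr_mult_closed[OF A_sub[OF aA] zc] by (simp add: E_def)
  qed
  show ?thesis
  proof
    show "ideal_prod GR (E I) (E M) \<subseteq> E (ideal_prod A I M)"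
    proof
      fix c assume "c \<in> ideal_prod GR (E I) (E M)"
      thus "c \<in> E (ideal_prod A I M)"
      proof (induction c rule: ideal_prod.induct)
        case (prod x y)
        have xc: "x \<in> carrier GR" and yc: "y \<in> carrier GR" using prod by (simp_all add: E_def)
        define T where "T = (\<lambda>z. s (nu z)) ` gsupp x"
        define F where "F = (\<lambda>r. res (x \<otimes>\<^bsub>GR\<^esub> delta (inv r)) \<otimes>\<^bsub>GR\<^esub> delta r)"
        have TG: "r \<in> carrier G" if "r \<in> T" for r using decomp_T_G[OF xc] that by (simp add: T_def)
        have Fc: "F r \<in> carrier GR" if "r \<in> T" for r
          using TG[OF that] res_carrier[OF mult_delta_closed[OF xc inv_closed[OF TG[OF that]]]] A_sub
          by (simp add: F_def mult_delta_closed)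
        have "x = (\<lambda>y. \<Sum>r\<in>T. F r y)" using decomp[OF xc] by (simp add: T_def F_def)
        hence "x \<otimes>\<^bsub>GR\<^esub> y = (\<lambda>y. \<Sum>r\<in>T. F r y) \<otimes>\<^bsub>GR\<^esub> y" by simp
        also have "\<dots> = (\<lambda>z. \<Sum>r\<in>T. (F r \<otimes>\<^bsub>GR\<^esub> y) z)"
          by (rule gr_sum_mult[OF _ Fc yc]) (simp add: T_def decomp_T_fin[OF xc])
        finally have eq: "x \<otimes>\<^bsub>GR\<^esub> y = (\<lambda>z. \<Sum>r\<in>T. (F r \<otimes>\<^bsub>GR\<^esub> y) z)" .
        have "(\<lambda>z. \<Sum>r\<in>T. (F r \<otimes>\<^bsub>GR\<^esub> y) z) \<in> E IM"
        proof (rule gr_ideal_sum[OF EIM])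
          show "finite T" by (simp add: T_def decomp_T_fin[OF xc])
          fix r assume rT: "r \<in> T"
          have rG: "r \<in> carrier G" using TG[OF rT] .
          define a where "a = res (x \<otimes>\<^bsub>GR\<^esub> delta (inv r))"
          have aI: "a \<in> I" using E_res[OF prod(1) inv_closed[OF rG]] by (simp add: a_def)
          have aA: "a \<in> carrier A" using A_ideal_carrier[OF I aI] .
          have "F r \<otimes>\<^bsub>GR\<^esub> y = a \<otimes>\<^bsub>GR\<^esub> (delta r \<otimes>\<^bsub>GR\<^esub> y)"
            using A_sub[OF aA] yc rG by (simp add: F_def a_def[symmetric] gr_assoc delta_carrier)
          moreover have "delta r \<otimes>\<^bsub>GR\<^esub> y \<in> E M"
            using gr_ideal_lmult[OF EM prod(2) delta_carrier[OF rG]] .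
          ultimately show "F r \<otimes>\<^bsub>GR\<^esub> y \<in> E IM" using aux1[OF aI] by simp
        qed
        thus ?case using eq by (simp add: IM_def)
      next
        case (sum s1 s2)
        thus ?case using gr_ideal_add[OF EIM] by (simp add: gr_add IM_def)
      qed
    qed
    show "E (ideal_prod A I M) \<subseteq> ideal_prod GR (E I) (E M)"
    proof
      define P where "P = ideal_prod GR (E I) (E M)"
      have Pi: "ideal P GR" unfolding P_def by (rule ring.ideal_prod_is_ideal[OF ring_GR EI EM])
      have aux2: "c \<otimes>\<^bsub>GR\<^esub> delta r \<in> P" if c: "c \<in> IM" and rG: "r \<in> carrier G" for c r
        using c unfolding IM_def
      proof (induction c rule: ideal_prod.induct)
        case (prod i j)
        have iA: "i \<in> carrier A" and jA: "j \<in> carrier A" using prod A_ideal_carrier I M by auto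
        have "i \<otimes>\<^bsub>A\<^esub> j \<otimes>\<^bsub>GR\<^esub> delta r = i \<otimes>\<^bsub>GR\<^esub> (j \<otimes>\<^bsub>GR\<^esub> delta r)"
          using A_mult[OF iA jA] A_sub[OF iA] A_sub[OF jA] rG by (simp add: gr_assoc delta_carrier)
        moreover have "i \<in> E I" using mem_E[OF I prod(1)] .
        moreover have "j \<otimes>\<^bsub>GR\<^esub> delta r \<in> E M"
          using gr_ideal_rmult[OF EM mem_E[OF M prod(2)] delta_carrier[OF rG]] .
        ultimately show ?case by (simp add: P_def ideal_prod.prod)
      next
        case (sum s1 s2)
        have s1A: "s1 \<in> carrier A" and s2A: "s2 \<in> carrier A"
          using sum(1,2) ring.ideal_prod_in_carrier[OF ring_A I M] by auto
        have "(s1 \<oplus>\<^bsub>A\<^esub> s2) \<otimes>\<^bsub>GR\<^esub> delta r = (s1 \<otimes>\<^bsub>GR\<^esub> delta r) \<oplus>\<^bsub>GR\<^esub> (s2 \<otimes>\<^bsub>GR\<^esub> delta r)"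
          using gr_l_distr[OF A_sub[OF s1A] A_sub[OF s2A] delta_carrier[OF rG]] by (simp add: gr_add)
        thus ?case using sum(3,4) by (simp add: P_def ideal_prod.sum)
      qed
      fix f assume f: "f \<in> E (ideal_prod A I M)"
      have fc: "f \<in> carrier GR" using f by (simp add: E_def)
      have "(\<lambda>y. \<Sum>r\<in>(\<lambda>z. s (nu z)) ` gsupp f. (res (f \<otimes>\<^bsub>GR\<^esub> delta (inv r)) \<otimes>\<^bsub>GR\<^esub> delta r) y) \<in> P"
      proof (rule gr_ideal_sum[OF Pi decomp_T_fin[OF fc]])
        fix r assume r: "r \<in> (\<lambda>z. s (nu z)) ` gsupp f"
        have rG: "r \<in> carrier G" using decomp_T_G[OF fc r] .
        have "res (f \<otimes>\<^bsub>GR\<^esub> delta (inv r)) \<in> IM" using E_res[OF f inv_closed[OF rG]] by (simp add: IM_def)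
        thus "res (f \<otimes>\<^bsub>GR\<^esub> delta (inv r)) \<otimes>\<^bsub>GR\<^esub> delta r \<in> P" using aux2 rG by blast
      qed
      thus "f \<in> P" using decomp[OF fc] by simp
    qed
  qed
qed

lemma pow_main:
  assumes J: "J = E Iaug" and d: "d \<ge> 1"
  shows "ideal_pow GR J d = E (ideal_pow A Iaug d) \<and> ideal (ideal_pow A Iaug d) A \<and> cstable (ideal_pow A Iaug d)"
  using d
proof (induction d)
  case 0 thus ?case by simp
next
  case (Suc d)
  have EI: "ideal (E Iaug) GR" by (rule E_ideal[OF aug_ideal' cs_aug])
  show ?case
  proof (cases "d = 0")
    case True
    have "ideal_pow GR J (Suc d) = J" using True ideal_prod_carrier_eq[of J] EI J by simp
    moreover have "ideal_pow A Iaug (Suc d) = Iaug"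
      using True group.ideal_prod_carrier_eq[OF Hs_group aug_ideal'] by simp
    ultimately show ?thesis using J aug_ideal' cs_aug by simp
  next
    case False
    hence IH: "ideal_pow GR J d = E (ideal_pow A Iaug d)" "ideal (ideal_pow A Iaug d) A"
        "cstable (ideal_pow A Iaug d)" using Suc by auto
    have "ideal_pow GR J (Suc d) = ideal_prod GR (E Iaug) (E (ideal_pow A Iaug d))"
      using IH(1) J by simp
    also have "\<dots> = E (ideal_pow A Iaug (Suc d))"
      using prod_E[OF aug_ideal' IH(2) cs_aug IH(3)] by simp
    finally show ?thesis
      using ring.ideal_prod_is_ideal[OF ring_A aug_ideal' IH(2)] cs_prod[OF aug_ideal' IH(2) cs_aug IH(3)]
      by simp
  qed
qed

end

context vsetting
begin

definition phi' :: "'a \<Rightarrow> 'a \<times> 'c" where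
  "phi' v = (v \<otimes> inv (s (nu v)), nu v)"

definition Om :: "('a \<Rightarrow> int) \<Rightarrow> ('a \<times> 'c \<Rightarrow> int)" where
  "Om f = (\<lambda>x. \<Sum>v\<in>{v \<in> carrier G. f v \<noteq> 0 \<and> phi' v = x}. f v)"

definition tcar :: "('a \<times> 'c \<Rightarrow> int) set" where
  "tcar = {F. (\<forall>x. x \<notin> H \<times> carrier S \<longrightarrow> F x = 0) \<and> finite {x. F x \<noteq> 0}}"

definition psi :: "'a \<times> 'c \<Rightarrow> 'a" where
  "psi x = fst x \<otimes> s (snd x)"

definition Oinv :: "('a \<times> 'c \<Rightarrow> int) \<Rightarrow> ('a \<Rightarrow> int)" where
  "Oinv F = (\<lambda>v. if v \<in> carrier G then F (phi' v) else 0)"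

definition TE :: "('a \<Rightarrow> int) set \<Rightarrow> ('a \<times> 'c \<Rightarrow> int) set" where
  "TE M = {F \<in> tcar. \<forall>p\<in>carrier S. (\<lambda>h. F (h, p)) \<in> M}"

lemma phi_in: "v \<in> carrier G \<Longrightarrow> phi' v \<in> H \<times> carrier S"
proof -
  assume v: "v \<in> carrier G"
  have p: "nu v \<in> carrier S" using nu_closed[OF v] .
  have "v \<otimes> inv (s (nu v)) \<in> H"
    using nu_eq_iff[OF v s_closed[OF p]] nu_s[OF p] by simp
  thus ?thesis using p by (simp add: phi'_def)
qed

lemma psi_G: "x \<in> H \<times> carrier S \<Longrightarrow> psi x \<in> carrier G"
  using H_sub s_closed by (auto simp: psi_def)

lemma phi_psi:
  assumes x: "x \<in> H \<times> carrier S"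
  shows "phi' (psi x) = x"
proof -
  obtain h p where hp: "x = (h, p)" "h \<in> H" "p \<in> carrier S" using x by auto
  interpret hom: group_hom G S nu by (rule nu_group_hom)
  have hG: "h \<in> carrier G" using hp H_sub by auto
  have spG: "s p \<in> carrier G" using s_closed[OF hp(3)] .
  have nuh: "nu h = \<one>\<^bsub>S\<^esub>" using hp(2) by (simp add: H_def)
  have "nu (h \<otimes> s p) = nu h \<otimes>\<^bsub>S\<^esub> nu (s p)" using hG spG by simp
  also have "\<dots> = p" using nuh nu_s[OF hp(3)] hp(3) by simp
  finally have n: "nu (h \<otimes> s p) = p" .
  have "h \<otimes> s p \<otimes> inv (s p) = h" using hG spG by (simp add: m_assoc)
  thus ?thesis using n hp by (simp add: phi'_def psi_def)
qed

lemma psi_phi: "v \<in> carrier G \<Longrightarrow> psi (phi' v) = v"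
proof -
  assume v: "v \<in> carrier G"
  have spG: "s (nu v) \<in> carrier G" using s_closed[OF nu_closed[OF v]] .
  show ?thesis using v spG by (simp add: psi_def phi'_def m_assoc)
qed

lemma phi_eq_iff: "v \<in> carrier G \<Longrightarrow> x \<in> H \<times> carrier S \<Longrightarrow> phi' v = x \<longleftrightarrow> v = psi x"
  using phi_psi psi_phi by metis

lemma Om_apply:
  assumes f: "f \<in> carrier GR"
  shows "Om f x = (if x \<in> H \<times> carrier S then f (psi x) else 0)"
proof (cases "x \<in> H \<times> carrier S")
  case True
  have "{v \<in> carrier G. f v \<noteq> 0 \<and> phi' v = x} = (if f (psi x) \<noteq> 0 then {psi x} else {})"
    using phi_eq_iff[OF _ True] psi_G[OF True] by auto
  thus ?thesis using True by (simp add: Om_def)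
next
  case False
  have e: "{v \<in> carrier G. f v \<noteq> 0 \<and> phi' v = x} = {}"
  proof (rule equals0I)
    fix v assume "v \<in> {v \<in> carrier G. f v \<noteq> 0 \<and> phi' v = x}"
    thus False using phi_in False by auto
  qed
  show ?thesis using False unfolding Om_def e by simp
qed

lemma Om_tcar: "f \<in> carrier GR \<Longrightarrow> Om f \<in> tcar"
proof -
  assume f: "f \<in> carrier GR"
  have "{x. Om f x \<noteq> 0} \<subseteq> phi' ` gsupp f"
  proof
    fix x assume "x \<in> {x. Om f x \<noteq> 0}"
    hence x: "x \<in> H \<times> carrier S" "f (psi x) \<noteq> 0" by (auto simp: Om_apply[OF f] split: if_splits)
    thus "x \<in> phi' ` gsupp f" using phi_psi[OF x(1)] by (auto simp: gsupp_def intro!: image_eqI[of _ _ "psi x"])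
  qed
  hence "finite {x. Om f x \<noteq> 0}" using finite_subset gr_carrier_fin[OF f] by blast
  thus ?thesis by (simp add: tcar_def Om_apply[OF f])
qed

lemma Oinv_carrier: "F \<in> tcar \<Longrightarrow> Oinv F \<in> carrier GR"
proof -
  assume F: "F \<in> tcar"
  have "gsupp (Oinv F) \<subseteq> psi ` {x. F x \<noteq> 0}"
  proof
    fix v assume "v \<in> gsupp (Oinv F)"
    hence v: "v \<in> carrier G" "F (phi' v) \<noteq> 0" by (auto simp: gsupp_def Oinv_def split: if_splits)
    thus "v \<in> psi ` {x. F x \<noteq> 0}" using psi_phi[OF v(1)] by (auto intro!: image_eqI[of _ _ "phi' v"])
  qed
  hence "finite (gsupp (Oinv F))" using F finite_subset by (auto simp: tcar_def)
  thus ?thesis by (simp add: gr_carrier Oinv_def)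
qed

lemma Om_Oinv: "F \<in> tcar \<Longrightarrow> Om (Oinv F) = F"
proof
  fix x assume F: "F \<in> tcar"
  show "Om (Oinv F) x = F x"
  proof (cases "x \<in> H \<times> carrier S")
    case True thus ?thesis using Om_apply[OF Oinv_carrier[OF F]] psi_G[OF True] phi_psi[OF True]
      by (simp add: Oinv_def)
  next
    case False
    have "F x = 0" using F False unfolding tcar_def by blast
    thus ?thesis using Om_apply[OF Oinv_carrier[OF F]] False by simp
  qed
qed

lemma Oinv_Om: "f \<in> carrier GR \<Longrightarrow> Oinv (Om f) = f"
proof
  fix v assume f: "f \<in> carrier GR"
  show "Oinv (Om f) v = f v"
  proof (cases "v \<in> carrier G")
    case True thus ?thesis using Om_apply[OF f] phi_in[OF True] psi_phi[OF True] by (simp add: Oinv_def)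
  next
    case False thus ?thesis using gr_carrierD[OF f] by (simp add: Oinv_def)
  qed
qed

lemma Om_bij: "bij_betw Om (carrier GR) tcar"
  by (rule bij_betw_byWitness[where f'=Oinv]) (auto simp: Om_Oinv Oinv_Om Om_tcar Oinv_carrier)

lemma Om_slice:
  assumes f: "f \<in> carrier GR" and p: "p \<in> carrier S"
  shows "(\<lambda>h. Om f (h, p)) = res (f \<otimes>\<^bsub>GR\<^esub> delta (inv (s p)))"
proof
  fix h
  have spG: "s p \<in> carrier G" using s_closed[OF p] .
  show "Om f (h, p) = res (f \<otimes>\<^bsub>GR\<^esub> delta (inv (s p))) h"
  proof (cases "h \<in> H")
    case True
    have hG: "h \<in> carrier G" using True H_sub by auto
    show ?thesis using True hG p spG mult_delta_r[OF inv_closed[OF spG] f, of h]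
      by (simp add: Om_apply[OF f] res_def psi_def)
  next
    case False thus ?thesis by (simp add: Om_apply[OF f] res_def)
  qed
qed

lemma Om_E:
  assumes M: "ideal M A"
  shows "Om ` E M = TE M"
proof
  show "Om ` E M \<subseteq> TE M"
  proof
    fix F assume "F \<in> Om ` E M"
    then obtain f where f: "f \<in> E M" "F = Om f" by blast
    have fc: "f \<in> carrier GR" using f by (simp add: E_def)
    have "(\<lambda>h. F (h, p)) \<in> M" if p: "p \<in> carrier S" for p
      using Om_slice[OF fc p] E_res[OF f(1) inv_closed[OF s_closed[OF p]]] f(2) by simp
    thus "F \<in> TE M" using Om_tcar[OF fc] f(2) by (simp add: TE_def)
  qed
  show "TE M \<subseteq> Om ` E M"
  proof
    fix F assume F: "F \<in> TE M"
    have Ft: "F \<in> tcar" using F by (simp add: TE_def)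
    define f where "f = Oinv F"
    have fc: "f \<in> carrier GR" using Oinv_carrier[OF Ft] by (simp add: f_def)
    have Ff: "F = Om f" using Om_Oinv[OF Ft] by (simp add: f_def)
    have "res (f \<otimes>\<^bsub>GR\<^esub> delta g) \<in> M" if g: "g \<in> carrier G" for g
    proof -
      interpret hom: group_hom G S nu by (rule nu_group_hom)
      define p where "p = nu (inv g)"
      have p: "p \<in> carrier S" using nu_closed[OF inv_closed[OF g]] by (simp add: p_def)
      have spG: "s p \<in> carrier G" using s_closed[OF p] .
      define k where "k = s p \<otimes> g"
      have kG: "k \<in> carrier G" using spG g by (simp add: k_def)
      have "nu k = nu (s p) \<otimes>\<^bsub>S\<^esub> nu g" using spG g by (simp add: k_def)
      also have "\<dots> = nu (inv g \<otimes> g)" using nu_s[OF p] g by (simp add: p_def)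
      also have "\<dots> = \<one>\<^bsub>S\<^esub>" using g by simp
      finally have kH: "k \<in> H" using kG by (simp add: H_def)
      have "delta (inv (s p)) \<otimes>\<^bsub>GR\<^esub> delta k = delta g"
        using spG g by (simp add: delta_mult k_def m_assoc[symmetric])
      hence "f \<otimes>\<^bsub>GR\<^esub> delta g = f \<otimes>\<^bsub>GR\<^esub> delta (inv (s p)) \<otimes>\<^bsub>GR\<^esub> delta k"
        using fc spG kG by (simp add: gr_assoc delta_carrier)
      hence "res (f \<otimes>\<^bsub>GR\<^esub> delta g) = res (f \<otimes>\<^bsub>GR\<^esub> delta (inv (s p))) \<otimes>\<^bsub>A\<^esub> delta k"
        using res_rmult_delta[OF kH mult_delta_closed[OF fc inv_closed[OF spG]]] by simp
      moreover have "res (f \<otimes>\<^bsub>GR\<^esub> delta (inv (s p))) \<in> M"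
      proof -
        have "(\<lambda>h. Om f (h, p)) \<in> M" using F Ff p unfolding TE_def by blast
        thus ?thesis using Om_slice[OF fc p] by simp
      qed
      ultimately show ?thesis using ideal.I_r_closed[OF M _ delta_A[OF kH]] by simp
    qed
    hence "f \<in> E M" using fc by (simp add: E_def)
    thus "F \<in> Om ` E M" using Ff by blast
  qed
qed

lemma span_sum:
  assumes fin: "finite P" and F: "\<And>p. p \<in> P \<Longrightarrow> F p \<in> tensor_span X Y"
  shows "(\<lambda>x. \<Sum>p\<in>P. F p x) \<in> tensor_span X Y"
  using fin F
proof (induction P rule: finite_induct)
  case empty thus ?case using tensor_span.zero by simp
next
  case (insert a P)
  thus ?case using tensor_span.add[of "F a" X Y "\<lambda>x. \<Sum>p\<in>P. F p x"] by simp
qed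

lemma span_TE:
  assumes M: "ideal M A"
  shows "tensor_span M (carrier (group_ring S)) = TE M"
proof
  show "tensor_span M (carrier (group_ring S)) \<subseteq> TE M"
  proof
    fix F assume "F \<in> tensor_span M (carrier (group_ring S))"
    thus "F \<in> TE M"
    proof (induction F rule: tensor_span.induct)
      case zero
      show ?case using A_ideal_zero[OF M] by (simp add: TE_def tcar_def)
    next
      case (elem a b)
      have aA: "a \<in> carrier A" using A_ideal_carrier[OF M elem(1)] .
      have finsup: "{x. tensor a b x \<noteq> 0} \<subseteq> gsupp a \<times> gsupp b"
        by (auto simp: tensor_def gsupp_def)
      have "finite (gsupp a \<times> gsupp b)"
        using gr_carrier_fin[OF A_sub[OF aA]] group.gr_carrier_fin[OF S_group elem(2)] by simp
      hence fin: "finite {x. tensor a b x \<noteq> 0}" using finsup finite_subset by blast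
      have out: "tensor a b x = 0" if "x \<notin> H \<times> carrier S" for x
        using that A_carrier_out[OF aA] group.gr_carrierD[OF S_group elem(2)]
        by (cases x) (auto simp: tensor_def)
      have "(\<lambda>h. tensor a b (h, p)) \<in> M" for p
        using A_ideal_smul[OF M elem(1), of "b p"] by (simp add: tensor_def mult.commute)
      thus ?case using fin out by (simp add: TE_def tcar_def)
    next
      case (add f g)
      have "{x. f x + g x \<noteq> 0} \<subseteq> {x. f x \<noteq> 0} \<union> {x. g x \<noteq> 0}" by auto
      hence "finite {x. f x + g x \<noteq> 0}" using add(3,4) finite_subset by (auto simp: TE_def tcar_def)
      moreover have "(\<lambda>h. f (h, p) + g (h, p)) \<in> M" if "p \<in> carrier S" for p
        using A_ideal_add[OF M] add(3,4) that by (auto simp: TE_def)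
      ultimately show ?case using add(3,4) by (simp add: TE_def tcar_def)
    next
      case (neg f)
      moreover have "(\<lambda>h. - f (h, p)) \<in> M" if "p \<in> carrier S" for p
        using A_ideal_neg[OF M] neg(2) that by (auto simp: TE_def)
      ultimately show ?case by (simp add: TE_def tcar_def)
    qed
  qed
  show "TE M \<subseteq> tensor_span M (carrier (group_ring S))"
  proof
    fix F assume F: "F \<in> TE M"
    define P where "P = snd ` {x. F x \<noteq> 0}"
    have finP: "finite P" using F by (simp add: P_def TE_def tcar_def)
    have PS: "P \<subseteq> carrier S" using F by (force simp: P_def TE_def tcar_def)
    have "F = (\<lambda>x. \<Sum>p\<in>P. tensor (\<lambda>h. F (h, p)) (delta p) x)"
    proof
      fix x :: "'a \<times> 'c"
      obtain h q where x: "x = (h, q)" by (cases x)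
      have "(\<Sum>p\<in>P. tensor (\<lambda>h. F (h, p)) (delta p) x) = (\<Sum>p\<in>P. if p = q then F (h, q) else 0)"
        by (rule sum.cong) (auto simp: x tensor_def delta_def)
      also have "\<dots> = F x"
        using finP by (auto simp: x P_def intro: image_eqI[of _ _ "(h, q)"])
      finally show "F x = (\<Sum>p\<in>P. tensor (\<lambda>h. F (h, p)) (delta p) x)" by simp
    qed
    moreover have "(\<lambda>x. \<Sum>p\<in>P. tensor (\<lambda>h. F (h, p)) (delta p) x) \<in> tensor_span M (carrier (group_ring S))"
    proof (rule span_sum[OF finP])
      fix p assume p: "p \<in> P"
      have "(\<lambda>h. F (h, p)) \<in> M" using F p PS by (auto simp: TE_def)
      moreover have "delta p \<in> carrier (group_ring S)" using group.delta_carrier[OF S_group] p PS by auto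
      ultimately show "tensor (\<lambda>h. F (h, p)) (delta p) \<in> tensor_span M (carrier (group_ring S))"
        by (rule tensor_span.elem)
    qed
    ultimately show "F \<in> tensor_span M (carrier (group_ring S))" by simp
  qed
qed

theorem vmain:
  assumes J: "ideal J GR" and JE: "J \<subseteq> E Iaug"
    and gen: "\<And>h. h \<in> H \<Longrightarrow> (\<lambda>x. delta h x - delta \<one> x) \<in> J"
    and d: "d \<ge> 1"
  shows "bij_betw Om (carrier GR) tcar \<and>
    Om ` ideal_pow GR J d = tensor_span (ideal_pow A Iaug d) (carrier (group_ring S))"
proof -
  have JEq: "J = E Iaug" by (rule J_eq[OF J JE gen])
  have pm: "ideal_pow GR J d = E (ideal_pow A Iaug d)" "ideal (ideal_pow A Iaug d) A"
    using pow_main[OF JEq d] by auto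
  show ?thesis using Om_bij Om_E[OF pm(2)] span_TE[OF pm(2)] pm(1) by simp
qed

end

lemma vb_words_append[simp]: "u @ v \<in> vb_words n \<longleftrightarrow> u \<in> vb_words n \<and> v \<in> vb_words n"
  by (auto simp: vb_words_def)

lemma vb_words_Cons[simp]: "l # v \<in> vb_words n \<longleftrightarrow> valid_letter n l \<and> v \<in> vb_words n"
  by (auto simp: vb_words_def)

lemma vb_words_Nil[simp]: "[] \<in> vb_words n"
  by (simp add: vb_words_def)

lemma valid_flip[simp]: "valid_letter n (flip l) = valid_letter n l"
  by (simp add: valid_letter_def flip_def)

lemma flip_flip[simp]: "flip (flip l) = l"
  by (simp add: flip_def)

lemma vb_eq_words: "vb_eq n u v \<Longrightarrow> u \<in> vb_words n \<and> v \<in> vb_words n"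
  by (induction rule: vb_eq.induct)
     (auto simp: sg_def rh_def valid_letter_def flip_def)

lemma veq_refl: "w \<in> vb_words n \<Longrightarrow> vb_eq n w w"
  by (rule vb_eq.refl)

lemma veq_sym: "vb_eq n u v \<Longrightarrow> vb_eq n v u"
  by (rule vb_eq.sym)

lemma veq_trans: "vb_eq n u v \<Longrightarrow> vb_eq n v w \<Longrightarrow> vb_eq n u w"
  by (rule vb_eq.trans)

lemma veq_app: "vb_eq n u u' \<Longrightarrow> vb_eq n v v' \<Longrightarrow> vb_eq n (u @ v) (u' @ v')"
proof -
  assume a: "vb_eq n u u'" and b: "vb_eq n v v'"
  have w: "u \<in> vb_words n" "u' \<in> vb_words n" "v \<in> vb_words n" "v' \<in> vb_words n"
    using vb_eq_words[OF a] vb_eq_words[OF b] by auto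
  have "vb_eq n ([] @ u @ v) ([] @ u' @ v)" by (rule vb_eq.cong[OF a]) (use w in auto)
  moreover have "vb_eq n (u' @ v @ []) (u' @ v' @ [])" by (rule vb_eq.cong[OF b]) (use w in auto)
  ultimately show ?thesis by (auto intro: veq_trans)
qed

lemma veq_appl: "vb_eq n v v' \<Longrightarrow> u \<in> vb_words n \<Longrightarrow> vb_eq n (u @ v) (u @ v')"
  by (rule veq_app[OF veq_refl])

lemma veq_appr: "vb_eq n u u' \<Longrightarrow> v \<in> vb_words n \<Longrightarrow> vb_eq n (u @ v) (u' @ v)"
  by (rule veq_app[OF _ veq_refl])

definition winv :: "vword \<Rightarrow> vword" where "winv w = rev (map flip w)"

lemma winv_words: "w \<in> vb_words n \<Longrightarrow> winv w \<in> vb_words n"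
  by (auto simp: winv_def vb_words_def)

lemma winv_winv[simp]: "winv (winv w) = w"
  by (simp add: winv_def rev_map comp_def)

lemma winv_r: "w \<in> vb_words n \<Longrightarrow> vb_eq n (w @ winv w) []"
proof (induction w)
  case Nil thus ?case by (simp add: winv_def veq_refl)
next
  case (Cons l w)
  have v: "valid_letter n l" "w \<in> vb_words n" using Cons.prems by auto
  have "vb_eq n ([l] @ (w @ winv w) @ [flip l]) ([l] @ [] @ [flip l])"
    by (rule vb_eq.cong[OF Cons.IH[OF v(2)]]) (use v in auto)
  moreover have "vb_eq n [l, flip l] []" by (rule vb_eq.cancel[OF v(1)])
  ultimately show ?case by (auto simp: winv_def intro: veq_trans)
qed

lemma winv_l: "w \<in> vb_words n \<Longrightarrow> vb_eq n (winv w @ w) []"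
  using winv_r[OF winv_words, of w n] by simp

definition VBc where "VBc n w = vb_class n w"

lemma class_eq_iff: "u \<in> vb_words n \<Longrightarrow> vb_class n u = vb_class n v \<longleftrightarrow> vb_eq n u v"
proof
  assume u: "u \<in> vb_words n" and e: "vb_class n u = vb_class n v"
  have "u \<in> vb_class n u" using u by (simp add: vb_class_def veq_refl)
  hence "u \<in> vb_class n v" using e by simp
  hence "vb_eq n v u" by (simp add: vb_class_def)
  thus "vb_eq n u v" by (rule veq_sym)
next
  assume "vb_eq n u v"
  thus "vb_class n u = vb_class n v"
    by (auto simp: vb_class_def intro: veq_trans veq_sym)
qed

lemma class_eqI: "vb_eq n u v \<Longrightarrow> vb_class n u = vb_class n v"
  using class_eq_iff vb_eq_words by blast

lemma rep_in: "w \<in> vb_words n \<Longrightarrow> vb_eq n w (vb_rep (vb_class n w))"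
proof -
  assume w: "w \<in> vb_words n"
  have "w \<in> vb_class n w" using w by (simp add: vb_class_def veq_refl)
  hence "vb_rep (vb_class n w) \<in> vb_class n w" unfolding vb_rep_def by (rule someI)
  thus ?thesis by (simp add: vb_class_def)
qed

lemma rep_words: "w \<in> vb_words n \<Longrightarrow> vb_rep (vb_class n w) \<in> vb_words n"
  using rep_in vb_eq_words by blast

lemma VB_carrier: "carrier (VB n) = vb_class n ` vb_words n"
  by (simp add: VB_def)

lemma VB_mult: "u \<in> vb_words n \<Longrightarrow> v \<in> vb_words n \<Longrightarrow>
   vb_class n u \<otimes>\<^bsub>VB n\<^esub> vb_class n v = vb_class n (u @ v)"
  by (simp add: VB_def) (rule class_eqI, rule veq_sym, rule veq_app; rule rep_in)

lemma VB_one: "\<one>\<^bsub>VB n\<^esub> = vb_class n []"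
  by (simp add: VB_def)

lemma VB_group: "group (VB n)"
proof (rule groupI)
  show "x \<otimes>\<^bsub>VB n\<^esub> y \<in> carrier (VB n)" if "x \<in> carrier (VB n)" "y \<in> carrier (VB n)" for x y
    using that by (auto simp: VB_carrier VB_mult)
  show "\<one>\<^bsub>VB n\<^esub> \<in> carrier (VB n)" by (simp add: VB_carrier VB_one)
  show "x \<otimes>\<^bsub>VB n\<^esub> y \<otimes>\<^bsub>VB n\<^esub> z = x \<otimes>\<^bsub>VB n\<^esub> (y \<otimes>\<^bsub>VB n\<^esub> z)"
    if "x \<in> carrier (VB n)" "y \<in> carrier (VB n)" "z \<in> carrier (VB n)" for x y z
    using that by (auto simp: VB_carrier VB_mult)
  show "\<one>\<^bsub>VB n\<^esub> \<otimes>\<^bsub>VB n\<^esub> x = x" if "x \<in> carrier (VB n)" for x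
    using that by (auto simp: VB_carrier VB_mult VB_one)
  show "\<exists>y\<in>carrier (VB n). y \<otimes>\<^bsub>VB n\<^esub> x = \<one>\<^bsub>VB n\<^esub>" if x: "x \<in> carrier (VB n)" for x
  proof -
    obtain w where w: "w \<in> vb_words n" "x = vb_class n w" using x by (auto simp: VB_carrier)
    have "vb_class n (winv w) \<otimes>\<^bsub>VB n\<^esub> x = vb_class n (winv w @ w)"
      using w winv_words[OF w(1)] by (simp add: VB_mult)
    also have "\<dots> = \<one>\<^bsub>VB n\<^esub>" using class_eqI[OF winv_l[OF w(1)]] by (simp add: VB_one)
    finally show ?thesis using winv_words[OF w(1)] by (auto simp: VB_carrier)
  qed
qed

lemma VB_inv: "w \<in> vb_words n \<Longrightarrow> inv\<^bsub>VB n\<^esub> (vb_class n w) = vb_class n (winv w)"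
proof -
  assume w: "w \<in> vb_words n"
  interpret VB: group "VB n" by (rule VB_group)
  have c: "vb_class n w \<in> carrier (VB n)" "vb_class n (winv w) \<in> carrier (VB n)"
    using w winv_words[OF w] by (auto simp: VB_carrier)
  have "vb_class n (winv w) \<otimes>\<^bsub>VB n\<^esub> vb_class n w = \<one>\<^bsub>VB n\<^esub>"
    using w winv_words[OF w] winv_l[OF w] by (simp add: VB_mult VB_one class_eqI)
  thus ?thesis using VB.inv_equality c by blast
qed

lemma VB_carrier_rep: "X \<in> carrier (VB n) \<Longrightarrow> vb_rep X \<in> vb_words n \<and> X = vb_class n (vb_rep X)"
proof -
  assume "X \<in> carrier (VB n)"
  then obtain w where w: "w \<in> vb_words n" "X = vb_class n w" by (auto simp: VB_carrier)
  have "vb_eq n w (vb_rep X)" using rep_in[OF w(1)] w(2) by simp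
  thus ?thesis using w class_eqI vb_eq_words by blast
qed


abbreviation tr :: "nat \<Rightarrow> nat \<Rightarrow> nat" where "tr i \<equiv> transpose i (Suc i)"

lemma tr_inv: "tr i \<circ> tr i = id"
  by (rule ext) (simp add: transpose_def)

lemma tr_braid: "tr i \<circ> tr (Suc i) \<circ> tr i = tr (Suc i) \<circ> tr i \<circ> tr (Suc i)"
  by (rule ext) (simp add: transpose_def)

lemma tr_comm: "i + 2 \<le> j \<Longrightarrow> tr i \<circ> tr j = tr j \<circ> tr i"
  by (rule ext) (simp add: transpose_def)

lemma tr_conj: "a < b \<Longrightarrow> tr b \<circ> transpose a b \<circ> tr b = transpose a (Suc b)"
  by (rule ext) (simp add: transpose_def)

lemma foldr_nu: "foldr (\<lambda>l f. nu_letter l \<circ> f) u g = nu_word u \<circ> g"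
  by (induction u) (simp_all add: nu_word_def comp_assoc)

lemma nu_word_append: "nu_word (u @ v) = nu_word u \<circ> nu_word v"
  unfolding nu_word_def[of "u @ v"] foldr_append nu_word_def[of v, symmetric] by (rule foldr_nu)

lemma nu_word_Nil[simp]: "nu_word [] = id"
  by (simp add: nu_word_def)

lemma nu_word_Cons: "nu_word (l # w) = nu_letter l \<circ> nu_word w"
  by (simp add: nu_word_def)

lemma nu_word_single: "nu_word [l] = nu_letter l"
  by (simp add: nu_word_def)

lemma nu_letter_flip[simp]: "nu_letter (flip l) = nu_letter l"
  by (simp add: nu_letter_def flip_def)

lemma nu_sg: "nu_word (sg i) = tr i"
  by (simp add: sg_def nu_word_single nu_letter_def)

lemma nu_rh: "nu_word (rh i) = tr i"
  by (simp add: rh_def nu_word_single nu_letter_def)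

lemma tr_braid_r: "tr i \<circ> (tr (Suc i) \<circ> tr i) = tr (Suc i) \<circ> (tr i \<circ> tr (Suc i))"
  using tr_braid[of i] by (simp add: comp_assoc)

lemma tr_comm_r: "i + 2 \<le> j \<Longrightarrow> tr i \<circ> tr j = tr j \<circ> tr i"
  by (rule tr_comm)

lemma vb_eq_nu: "vb_eq n u v \<Longrightarrow> nu_word u = nu_word v"
proof (induction rule: vb_eq.induct)
  case (cong u v a b) thus ?case by (simp add: nu_word_append)
next
  case (cancel l)
  have "nu_letter l \<circ> nu_letter l = id" by (simp add: nu_letter_def)
  thus ?case by (simp add: nu_word_Cons)
next
  case (ss_braid i) show ?case
    unfolding nu_word_append nu_sg Suc_eq_plus1[symmetric] by (rule tr_braid_r)
next
  case (ss_comm i j) show ?case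
    unfolding nu_word_append nu_sg by (rule tr_comm[OF ss_comm(5)])
next
  case (rr_braid i) show ?case
    unfolding nu_word_append nu_rh Suc_eq_plus1[symmetric] by (rule tr_braid_r)
next
  case (rr_comm i j) show ?case
    unfolding nu_word_append nu_rh by (rule tr_comm[OF rr_comm(5)])
next
  case (rr_inv i) show ?case
    unfolding nu_word_append nu_rh by simp
next
  case (sr_comm1 i j) show ?case
    unfolding nu_word_append nu_rh nu_sg by (rule tr_comm[OF sr_comm1(5)])
next
  case (sr_comm2 i j) show ?case
    unfolding nu_word_append nu_rh nu_sg by (rule tr_comm[OF sr_comm2(5), symmetric])
next
  case (mixed i) show ?case
    unfolding nu_word_append nu_rh nu_sg Suc_eq_plus1[symmetric] by (rule tr_braid_r)
qed simp_all

lemma nu_class: "w \<in> vb_words n \<Longrightarrow> nu (vb_class n w) = nu_word w"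
proof -
  assume w: "w \<in> vb_words n"
  have "nu_word w = nu_word (vb_rep (vb_class n w))" by (rule vb_eq_nu[OF rep_in[OF w]])
  thus ?thesis unfolding nu_def by (rule HOL.sym)
qed

lemma nu_word_permutes: "w \<in> vb_words n \<Longrightarrow> nu_word w permutes {1..n}"
proof (induction w)
  case Nil show ?case unfolding nu_word_Nil by (rule permutes_id)
next
  case (Cons l w)
  have l: "nu_letter l permutes {1..n}"
    using Cons.prems unfolding nu_letter_def by (intro permutes_swap_id) (auto simp: valid_letter_def)
  have w: "nu_word w permutes {1..n}" using Cons by simp
  show ?case unfolding nu_word_Cons by (rule permutes_compose[OF w l])
qed

lemma nu_hom: "nu \<in> hom (VB n) (sym_group n)"
proof -
  have c: "nu X \<in> carrier (sym_group n)" if "X \<in> carrier (VB n)" for X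
    using that nu_word_permutes by (auto simp: VB_carrier nu_class sym_group_def)
  have m: "nu (X \<otimes>\<^bsub>VB n\<^esub> Y) = nu X \<otimes>\<^bsub>sym_group n\<^esub> nu Y"
    if "X \<in> carrier (VB n)" "Y \<in> carrier (VB n)" for X Y
    using that by (auto simp: VB_carrier VB_mult nu_class nu_word_append sym_group_def)
  show ?thesis using c m by (simp add: hom_def)
qed

definition rhow :: "vword \<Rightarrow> bool" where
  "rhow w \<longleftrightarrow> (\<forall>l\<in>set w. l = (Rh (gidx (fst l)), False))"

lemma rhow_append[simp]: "rhow (u @ v) \<longleftrightarrow> rhow u \<and> rhow v"
  by (auto simp: rhow_def)

lemma transp_word:
  assumes "1 \<le> a" "a < b" "b \<le> n"
  shows "\<exists>w. w \<in> vb_words n \<and> rhow w \<and> nu_word w = transpose a b"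
  using assms
proof (induction b)
  case 0 thus ?case by simp
next
  case (Suc b)
  show ?case
  proof (cases "a = b")
    case True
    show ?thesis
      by (rule exI[of _ "[(Rh a, False)]"])
         (use Suc.prems True in \<open>auto simp: rhow_def valid_letter_def nu_word_single nu_letter_def\<close>)
  next
    case False
    then obtain w where w: "w \<in> vb_words n" "rhow w" "nu_word w = transpose a b" using Suc by auto
    have ab: "a < b" using False Suc.prems by simp
    have e: "nu_word (rh b @ w @ rh b) = transpose a (Suc b)"
      unfolding nu_word_append nu_rh w(3) using tr_conj[OF ab] by (simp add: comp_assoc)
    have v: "rh b @ w @ rh b \<in> vb_words n" "rhow (rh b @ w @ rh b)"
      using Suc.prems w ab by (auto simp: rh_def rhow_def valid_letter_def)
    show ?thesis using e v by blast
  qed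
qed

lemma perm_word:
  assumes p: "p permutes {1..n}"
  shows "\<exists>w. w \<in> vb_words n \<and> rhow w \<and> nu_word w = p"
  using p finite_atLeastAtMost
proof (induction p rule: permutes_induct)
  case id show ?case by (rule exI[of _ "[]"]) (simp add: rhow_def)
next
  case (swap a b p)
  obtain w where w: "w \<in> vb_words n" "rhow w" "nu_word w = p" using swap by auto
  have "\<exists>u. u \<in> vb_words n \<and> rhow u \<and> nu_word u = transpose a b"
  proof (cases "a < b")
    case True thus ?thesis using transp_word swap by auto
  next
    case False hence "b < a" using swap by simp
    thus ?thesis using transp_word[of b a n] swap by (auto simp: transpose_commute)
  qed
  then obtain u where u: "u \<in> vb_words n" "rhow u" "nu_word u = transpose a b" by blast
  show ?case by (rule exI[of _ "u @ w"]) (use u w in \<open>simp add: nu_word_append\<close>)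
qed

lemma s_sec_props:
  assumes p: "p \<in> carrier (sym_group n)"
  shows "s_sec n p \<in> carrier (VB n) \<and> nu (s_sec n p) = p"
proof -
  define P where "P = (\<lambda>w. w \<in> vb_words n \<and> (\<forall>l\<in>set w. l = (Rh (gidx (fst l)), False)) \<and> nu_word w = p)"
  have ex: "\<exists>w. P w"
    using perm_word[of p n] p unfolding P_def rhow_def sym_group_def by simp
  have Pw: "P (SOME w. P w)" by (rule someI_ex[OF ex])
  have sdef: "s_sec n p = vb_class n (SOME w. P w)" unfolding s_sec_def P_def by (rule HOL.refl)
  have w: "(SOME w. P w) \<in> vb_words n" "nu_word (SOME w. P w) = p" using Pw unfolding P_def by auto
  show ?thesis unfolding sdef using w by (simp add: VB_carrier nu_class)
qed

lemma vset: "vsetting (VB n) (sym_group n) (VP_set n) nu (s_sec n)"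
proof (rule vsetting.intro[OF VB_group], rule vsetting_axioms.intro)
  show "group (sym_group n)" by (rule sym_group_is_group)
  show "nu \<in> hom (VB n) (sym_group n)" by (rule nu_hom)
  show "VP_set n = {x \<in> carrier (VB n). nu x = \<one>\<^bsub>sym_group n\<^esub>}"
    by (simp add: VP_set_def sym_group_def)
  show "\<And>p. p \<in> carrier (sym_group n) \<Longrightarrow> s_sec n p \<in> carrier (VB n)" using s_sec_props by blast
  show "\<And>p. p \<in> carrier (sym_group n) \<Longrightarrow> nu (s_sec n p) = p" using s_sec_props by blast
qed


definition rlt :: "nat \<Rightarrow> vword \<Rightarrow> bool" where
  "rlt m w \<longleftrightarrow> (\<forall>l\<in>set w. \<exists>i. l = (Rh i, False) \<and> 1 \<le> i \<and> i < m)"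

lemma rlt_append[simp]: "rlt m (u @ v) \<longleftrightarrow> rlt m u \<and> rlt m v"
  by (auto simp: rlt_def)

lemma rlt_rh: "rlt m (rh i) \<longleftrightarrow> 1 \<le> i \<and> i < m"
  by (auto simp: rlt_def rh_def)

lemma rlt_Nil[simp]: "rlt m []" by (simp add: rlt_def)

lemma rlt_words: "rlt m w \<Longrightarrow> m \<le> n \<Longrightarrow> w \<in> vb_words n"
  by (fastforce simp: rlt_def vb_words_def valid_letter_def)

lemma rh_words: "1 \<le> i \<Longrightarrow> i < n \<Longrightarrow> rh i \<in> vb_words n"
  by (simp add: rh_def valid_letter_def)

lemma rh_comm_word:
  assumes j: "1 \<le> j" "j < n"
    and v: "\<forall>l\<in>set v. \<exists>i. l = (Rh i, False) \<and> 1 \<le> i \<and> i < n \<and> (i + 2 \<le> j \<or> j + 2 \<le> i)"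
  shows "vb_eq n (v @ rh j) (rh j @ v)"
  using v
proof (induction v)
  case Nil thus ?case using rh_words[OF j] by (simp add: veq_refl)
next
  case (Cons l v)
  obtain i where i: "l = (Rh i, False)" "1 \<le> i" "i < n" "i + 2 \<le> j \<or> j + 2 \<le> i"
    using Cons.prems by auto
  have IH: "vb_eq n (v @ rh j) (rh j @ v)" using Cons by simp
  have vw: "v \<in> vb_words n"
    using Cons.prems by (fastforce simp: vb_words_def valid_letter_def)
  have "vb_eq n (rh i @ (v @ rh j)) (rh i @ (rh j @ v))"
    by (rule veq_appl[OF IH rh_words[OF i(2,3)]])
  moreover have "vb_eq n (rh i @ rh j) (rh j @ rh i)"
  proof (cases "i + 2 \<le> j")
    case True thus ?thesis by (intro vb_eq.rr_comm) (use i j in auto)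
  next
    case False hence ji: "j + 2 \<le> i" using i(4) by simp
    show ?thesis by (rule veq_sym, rule vb_eq.rr_comm) (use i j ji in auto)
  qed
  hence "vb_eq n ((rh i @ rh j) @ v) ((rh j @ rh i) @ v)"
    by (rule veq_appr[OF _ vw])
  ultimately have "vb_eq n (rh i @ v @ rh j) (rh j @ rh i @ v)"
    by (auto intro: veq_trans)
  thus ?case using i(1) by (simp add: rh_def)
qed

definition cwl :: "nat \<Rightarrow> nat \<Rightarrow> vword" where
  "cwl a b = map (\<lambda>i. (Rh i, False)) (rev [a..<b])"

lemma upt_split3: "a \<le> b \<Longrightarrow> b \<le> c \<Longrightarrow> [a..<c] = [a..<b] @ [b..<c]"
  using upt_add_eq_append[of a b "c - b"] by simp

lemma cwl_split: "a \<le> b \<Longrightarrow> b \<le> c \<Longrightarrow> cwl a c = cwl b c @ cwl a b"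
  unfolding cwl_def by (simp add: upt_split3[of a b c])

lemma cwl_single: "cwl a (Suc a) = rh a"
  by (simp add: cwl_def rh_def)

lemma cwl_empty: "cwl a a = []"
  by (simp add: cwl_def)

lemma cwl_set: "l \<in> set (cwl a b) \<longleftrightarrow> (\<exists>i. l = (Rh i, False) \<and> a \<le> i \<and> i < b)"
  by (auto simp: cwl_def)

lemma cwl_words: "1 \<le> a \<Longrightarrow> b \<le> n \<Longrightarrow> cwl a b \<in> vb_words n"
  by (auto simp: vb_words_def valid_letter_def cwl_set)

lemma nu_cwl_aux: "nu_word (cwl k (Suc (k + d))) k = Suc (k + d)"
proof (induction d)
  case 0 thus ?case by (simp add: cwl_single nu_rh)
next
  case (Suc d)
  have "cwl k (Suc (Suc (k + d))) = cwl (Suc (k + d)) (Suc (Suc (k + d))) @ cwl k (Suc (k + d))"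
    by (rule cwl_split) simp_all
  thus ?case using Suc by (simp add: cwl_single nu_rh nu_word_append)
qed

lemma nu_cwl: "1 \<le> k \<Longrightarrow> k \<le> m \<Longrightarrow> nu_word (cwl k (Suc m)) k = Suc m"
  using nu_cwl_aux[of k "m - k"] by simp

lemma nu_rlt_fix: "rlt m w \<Longrightarrow> m < x \<Longrightarrow> nu_word w x = x"
proof (induction w)
  case Nil thus ?case by simp
next
  case (Cons l w)
  obtain i where i: "l = (Rh i, False)" "i < m" using Cons.prems by (auto simp: rlt_def)
  have "nu_word w x = x" using Cons by (simp add: rlt_def)
  moreover have "x \<noteq> i" "x \<noteq> i + 1" using i Cons.prems by auto
  ultimately show ?case using i by (simp add: nu_word_Cons nu_letter_def)
qed

lemma KL:
  assumes j: "1 \<le> j" "j \<le> m" and k: "1 \<le> k" "k \<le> Suc m" and mn: "Suc m \<le> n"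
  shows "\<exists>u k'. rlt m u \<and> 1 \<le> k' \<and> k' \<le> Suc m \<and> vb_eq n (cwl k (Suc m) @ rh j) (u @ cwl k' (Suc m))"
proof -
  have cw: "cwl a (Suc m) \<in> vb_words n" if "1 \<le> a" for a using cwl_words[OF that mn] .
  consider (lt) "j + 1 < k" | (eq1) "j + 1 = k" | (eq) "j = k" | (gt) "k < j" by linarith
  thus ?thesis
  proof cases
    case lt
    have "vb_eq n (cwl k (Suc m) @ rh j) (rh j @ cwl k (Suc m))"
      by (rule rh_comm_word) (use j mn lt in \<open>auto simp: cwl_set\<close>)
    moreover have "rlt m (rh j)" using j lt k by (simp add: rlt_rh)
    ultimately show ?thesis using k by blast
  next
    case eq1
    have "cwl j (Suc m) = cwl k (Suc m) @ cwl j k" by (rule cwl_split) (use eq1 k in auto)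
    hence "cwl k (Suc m) @ rh j = [] @ cwl j (Suc m)" using eq1 by (simp add: cwl_single[symmetric])
    moreover have "vb_eq n (cwl j (Suc m)) (cwl j (Suc m))" using cw j by (simp add: veq_refl)
    ultimately have "rlt m [] \<and> 1 \<le> j \<and> j \<le> Suc m \<and> vb_eq n (cwl k (Suc m) @ rh j) ([] @ cwl j (Suc m))"
      using j by simp
    thus ?thesis by blast
  next
    case eq
    have sp: "cwl k (Suc m) = cwl (Suc k) (Suc m) @ rh k" using eq j
      by (simp add: cwl_split[of k "Suc k" "Suc m"] cwl_single)
    have "vb_eq n (cwl (Suc k) (Suc m) @ (rh k @ rh k)) (cwl (Suc k) (Suc m) @ [])"
      by (rule veq_appl[OF vb_eq.rr_inv cw]) (use eq j mn in auto)
    hence "vb_eq n (cwl k (Suc m) @ rh j) ([] @ cwl (Suc k) (Suc m))" using sp eq by simp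
    hence "rlt m [] \<and> 1 \<le> Suc k \<and> Suc k \<le> Suc m \<and> vb_eq n (cwl k (Suc m) @ rh j) ([] @ cwl (Suc k) (Suc m))"
      using eq j by simp
    thus ?thesis by blast
  next
    case gt
    define X where "X = cwl (Suc j) (Suc m)"
    define D where "D = cwl k (j - 1)"
    have j2: "2 \<le> j" using gt k by simp
    have sp: "cwl k (Suc m) = X @ rh j @ rh (j - 1) @ D"
    proof -
      have "cwl k (Suc m) = cwl (Suc j) (Suc m) @ cwl k (Suc j)" by (rule cwl_split) (use gt j in auto)
      moreover have "cwl k (Suc j) = cwl j (Suc j) @ cwl k j" by (rule cwl_split) (use gt in auto)
      moreover have "cwl k j = cwl (j - 1) j @ cwl k (j - 1)" by (rule cwl_split) (use gt in auto)
      moreover have "cwl (j - 1) j = rh (j - 1)" using cwl_single[of "j - 1"] j2 by simp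
      ultimately show ?thesis by (simp add: X_def D_def cwl_single)
    qed
    have Xw: "X \<in> vb_words n" unfolding X_def by (rule cw) simp
    have Dw: "D \<in> vb_words n" unfolding D_def using cwl_words[OF k(1), of "j - 1" n] j mn by simp
    have rj: "rh j \<in> vb_words n" "rh (j - 1) \<in> vb_words n" using j j2 mn by (simp_all add: rh_words)
    have s1: "vb_eq n (D @ rh j) (rh j @ D)"
      by (rule rh_comm_word) (use j mn j2 k gt in \<open>auto simp: D_def cwl_set less_diff_conv\<close>)
    have s2: "vb_eq n (rh j @ rh (j - 1) @ rh j) (rh (j - 1) @ rh j @ rh (j - 1))"
    proof -
      have "vb_eq n (rh (j - 1) @ rh (j - 1 + 1) @ rh (j - 1)) (rh (j - 1 + 1) @ rh (j - 1) @ rh (j - 1 + 1))"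
        by (rule vb_eq.rr_braid) (use j2 j mn in auto)
      thus ?thesis using j2 by (simp add: veq_sym)
    qed
    have s3: "vb_eq n (X @ rh (j - 1)) (rh (j - 1) @ X)"
      by (rule rh_comm_word) (use j mn j2 in \<open>auto simp: X_def cwl_set\<close>)
    have "vb_eq n (X @ rh j @ rh (j - 1) @ (D @ rh j)) (X @ rh j @ rh (j - 1) @ (rh j @ D))"
      using veq_appl[OF s1, of "X @ rh j @ rh (j - 1)"] Xw rj by simp
    moreover have "vb_eq n (X @ (rh j @ rh (j - 1) @ rh j) @ D) (X @ (rh (j - 1) @ rh j @ rh (j - 1)) @ D)"
      by (rule veq_appl[OF veq_appr[OF s2 Dw] Xw])
    moreover have "vb_eq n ((X @ rh (j - 1)) @ (rh j @ rh (j - 1) @ D)) ((rh (j - 1) @ X) @ (rh j @ rh (j - 1) @ D))"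
      by (rule veq_appr[OF s3]) (use rj Dw in simp)
    ultimately have "vb_eq n (X @ rh j @ rh (j - 1) @ D @ rh j) (rh (j - 1) @ X @ rh j @ rh (j - 1) @ D)"
      by (auto intro: veq_trans)
    hence "vb_eq n (cwl k (Suc m) @ rh j) (rh (j - 1) @ cwl k (Suc m))" using sp by simp
    moreover have "rlt m (rh (j - 1))" using j j2 unfolding rlt_rh by arith
    ultimately show ?thesis using k by blast
  qed
qed

lemma NF:
  assumes w: "rlt (Suc m) w" and mn: "Suc m \<le> n"
  shows "\<exists>u k. rlt m u \<and> 1 \<le> k \<and> k \<le> Suc m \<and> vb_eq n w (u @ cwl k (Suc m))"
  using w
proof (induction w rule: rev_induct)
  case Nil
  have "vb_eq n [] ([] @ cwl (Suc m) (Suc m))" by (simp add: cwl_empty veq_refl)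
  hence "rlt m [] \<and> 1 \<le> Suc m \<and> Suc m \<le> Suc m \<and> vb_eq n [] ([] @ cwl (Suc m) (Suc m))" by simp
  thus ?case by blast
next
  case (snoc l w)
  obtain j where j: "l = (Rh j, False)" "1 \<le> j" "j < Suc m" using snoc.prems by (auto simp: rlt_def)
  obtain u k where uk: "rlt m u" "1 \<le> k" "k \<le> Suc m" "vb_eq n w (u @ cwl k (Suc m))"
    using snoc by auto
  obtain u' k' where uk': "rlt m u'" "1 \<le> k'" "k' \<le> Suc m" "vb_eq n (cwl k (Suc m) @ rh j) (u' @ cwl k' (Suc m))"
    using KL[of j m k n] j uk mn by auto
  have uw: "u \<in> vb_words n" using rlt_words[OF uk(1)] mn by simp
  have rjw: "rh j \<in> vb_words n" using j mn by (simp add: rh_words)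
  have "vb_eq n (w @ rh j) ((u @ cwl k (Suc m)) @ rh j)" by (rule veq_appr[OF uk(4) rjw])
  moreover have "vb_eq n (u @ (cwl k (Suc m) @ rh j)) (u @ (u' @ cwl k' (Suc m)))"
    by (rule veq_appl[OF uk'(4) uw])
  ultimately have "vb_eq n (w @ rh j) ((u @ u') @ cwl k' (Suc m))"
    by (auto intro: veq_trans)
  moreover have "rlt m (u @ u')" using uk uk' by simp
  ultimately have "rlt m (u @ u') \<and> 1 \<le> k' \<and> k' \<le> Suc m \<and> vb_eq n (w @ [l]) ((u @ u') @ cwl k' (Suc m))"
    using uk' j by (simp add: rh_def)
  thus ?case by blast
qed

lemma coxeter:
  assumes "rlt m w" "m \<le> n" "nu_word w = id"
  shows "vb_eq n w []"
  using assms
proof (induction m arbitrary: w)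
  case 0
  hence "w = []" by (cases w) (auto simp: rlt_def)
  thus ?case by (simp add: veq_refl)
next
  case (Suc m)
  obtain u k where uk: "rlt m u" "1 \<le> k" "k \<le> Suc m" "vb_eq n w (u @ cwl k (Suc m))"
    using NF[OF Suc.prems(1,2)] by auto
  have nuw: "nu_word (u @ cwl k (Suc m)) = id"
    unfolding vb_eq_nu[OF uk(4), symmetric] by (rule Suc.prems(3))
  have kk: "k = Suc m"
  proof (rule ccontr)
    assume "k \<noteq> Suc m"
    hence km: "k \<le> m" using uk by simp
    have "nu_word (u @ cwl k (Suc m)) k = nu_word u (Suc m)"
      by (simp add: nu_word_append nu_cwl[OF uk(2) km])
    also have "\<dots> = Suc m" by (rule nu_rlt_fix[OF uk(1)]) simp
    finally show False using nuw km by simp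
  qed
  have wu: "vb_eq n w u" using uk(4) kk by (simp add: cwl_empty)
  have "nu_word u = id" unfolding vb_eq_nu[OF wu, symmetric] by (rule Suc.prems(3))
  hence "vb_eq n u []" using Suc.IH[OF uk(1)] Suc.prems(2) by simp
  thus ?case using veq_trans[OF wu] by blast
qed


context group
begin

lemma solve3: "a \<in> carrier G \<Longrightarrow> b \<in> carrier G \<Longrightarrow> d \<in> carrier G \<Longrightarrow> z \<in> carrier G \<Longrightarrow>
  inv a \<otimes> (z \<otimes> inv d) = b \<longleftrightarrow> z = a \<otimes> b \<otimes> d"
  using inv_solve_left'[of b a "z \<otimes> inv d"] inv_solve_right'[of "a \<otimes> b" z d] by simp

lemma G3:
  assumes a: "a \<in> carrier G" and b: "b \<in> carrier G" and c: "c \<in> carrier G" and d: "d \<in> carrier G"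
  shows "delta a \<otimes>\<^bsub>GR\<^esub> (\<lambda>z. delta b z - delta c z) \<otimes>\<^bsub>GR\<^esub> delta d
       = (\<lambda>z. delta (a \<otimes> b \<otimes> d) z - delta (a \<otimes> c \<otimes> d) z)"
proof
  fix z
  have F: "(\<lambda>z. delta b z - delta c z) \<in> carrier GR"
    using gr_ideal_diff[OF ring.oneideal[OF ring_GR] delta_carrier[OF b] delta_carrier[OF c]] .
  have aF: "delta a \<otimes>\<^bsub>GR\<^esub> (\<lambda>z. delta b z - delta c z) \<in> carrier GR"
    using gr_mult_closed[OF delta_carrier[OF a] F] .
  show "(delta a \<otimes>\<^bsub>GR\<^esub> (\<lambda>z. delta b z - delta c z) \<otimes>\<^bsub>GR\<^esub> delta d) z
      = delta (a \<otimes> b \<otimes> d) z - delta (a \<otimes> c \<otimes> d) z"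
  proof (cases "z \<in> carrier G")
    case True
    have "(delta a \<otimes>\<^bsub>GR\<^esub> (\<lambda>z. delta b z - delta c z) \<otimes>\<^bsub>GR\<^esub> delta d) z
        = (delta a \<otimes>\<^bsub>GR\<^esub> (\<lambda>z. delta b z - delta c z)) (z \<otimes> inv d)"
      using mult_delta_r[OF d aF, of z] True by simp
    also have "\<dots> = delta b (inv a \<otimes> (z \<otimes> inv d)) - delta c (inv a \<otimes> (z \<otimes> inv d))"
      using delta_mult_l[OF a, of _ "z \<otimes> inv d"] True d by simp
    also have "\<dots> = delta (a \<otimes> b \<otimes> d) z - delta (a \<otimes> c \<otimes> d) z"
      using solve3[OF a b d True] solve3[OF a c d True] by (auto simp: delta_def)
    finally show ?thesis .
  next
    case False
    have "a \<otimes> b \<otimes> d \<noteq> z" "a \<otimes> c \<otimes> d \<noteq> z" using False a b c d by auto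
    thus ?thesis using False by (simp add: gr_mult_out delta_def)
  qed
qed

end

definition rw :: "vword \<Rightarrow> vword" where
  "rw w = map (\<lambda>l. (Rh (gidx (fst l)), False)) w"

lemma rw_rlt: "w \<in> vb_words n \<Longrightarrow> rlt n (rw w)"
  by (auto simp: rw_def rlt_def vb_words_def valid_letter_def)

lemma rw_nu: "nu_word (rw w) = nu_word w"
  by (induction w) (simp_all add: rw_def nu_word_Cons nu_letter_def)

lemma rw_Cons: "rw (l # w) = rh (gidx (fst l)) @ rw w"
  by (simp add: rw_def rh_def)

lemma rh_inv_class: "1 \<le> i \<Longrightarrow> i < n \<Longrightarrow> vb_class n [(Rh i, True)] = vb_class n (rh i)"
proof -
  assume i: "1 \<le> i" "i < n"
  have v: "valid_letter n (Rh i, True)" using i by (simp add: valid_letter_def)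
  have "vb_eq n ([(Rh i, True)] @ (rh i @ rh i) @ []) ([(Rh i, True)] @ [] @ [])"
    by (rule vb_eq.cong[OF vb_eq.rr_inv[OF i]]) (use v in auto)
  hence a: "vb_eq n [(Rh i, True)] ([(Rh i, True), (Rh i, False)] @ rh i)"
    by (simp add: rh_def veq_sym)
  have "vb_eq n ([] @ [(Rh i, True), (Rh i, False)] @ rh i) ([] @ [] @ rh i)"
    by (rule vb_eq.cong) (use vb_eq.cancel[OF v] i in \<open>auto simp: flip_def rh_def valid_letter_def\<close>)
  hence "vb_eq n [(Rh i, True)] (rh i)" using a by (auto intro: veq_trans)
  thus ?thesis by (rule class_eqI)
qed

theorem final_VB:
  fixes n d :: nat
  assumes "d \<ge> 1"
  shows "bij_betw (Omega n) (carrier (group_ring (VB n))) (tensor_carrier n)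
    \<and> Omega n ` ideal_pow (group_ring (VB n)) (J_ideal n) d
        = tensor_span (ideal_pow (group_ring (VP n)) (aug_ideal (VP n)) d)
                      (carrier (group_ring (sym_group n)))"
proof -
  interpret V: vsetting "VB n" "sym_group n" "VP_set n" nu "s_sec n" by (rule vset)
  define Jg where "Jg = {(\<lambda>x. delta (sigma n i) x - delta (rho n i) x) | i. 1 \<le> i \<and> i < n}"
  have sigG: "sigma n i \<in> carrier (VB n)" "rho n i \<in> carrier (VB n)" if "1 \<le> i" "i < n" for i
    using that by (auto simp: sigma_def rho_def VB_carrier sg_def rh_def valid_letter_def)
  have Jg_sub: "Jg \<subseteq> carrier V.GR"
    using sigG V.gr_ideal_diff[OF ring.oneideal[OF V.ring_GR] V.delta_carrier V.delta_carrier]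
    by (auto simp: Jg_def)
  have JI: "ideal (J_ideal n) V.GR"
    unfolding J_ideal_def Jg_def[symmetric] by (rule ring.genideal_ideal[OF V.ring_GR Jg_sub])
  have Jself: "Jg \<subseteq> J_ideal n"
    unfolding J_ideal_def Jg_def[symmetric] by (rule ring.genideal_self[OF V.ring_GR Jg_sub])
  have JE: "J_ideal n \<subseteq> V.E V.Iaug"
    unfolding J_ideal_def Jg_def[symmetric]
  proof (rule ring.genideal_minimal[OF V.ring_GR V.E_ideal[OF V.aug_ideal' V.cs_aug]])
    show "Jg \<subseteq> V.E V.Iaug"
    proof
      fix f assume "f \<in> Jg"
      then obtain i where i: "1 \<le> i" "i < n" "f = (\<lambda>x. delta (sigma n i) x - delta (rho n i) x)"
        by (auto simp: Jg_def)
      have "nu (sigma n i) = nu (rho n i)"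
        using i by (simp add: sigma_def rho_def nu_class sg_def rh_def valid_letter_def
            nu_sg[unfolded sg_def] nu_rh[unfolded rh_def])
      hence "sigma n i \<otimes>\<^bsub>VB n\<^esub> inv\<^bsub>VB n\<^esub> rho n i \<in> VP_set n"
        using V.nu_eq_iff[OF sigG[OF i(1,2)]] by simp
      thus "f \<in> V.E V.Iaug" using V.E_aug_gen[OF sigG[OF i(1,2)]] i(3) by simp
    qed
  qed
  have W: "(\<lambda>x. delta (vb_class n w) x - delta (vb_class n (rw w)) x) \<in> J_ideal n"
    if w: "w \<in> vb_words n" for w
    using w
  proof (induction w)
    case Nil
    show ?case using V.gr_ideal_zero[OF JI] by (simp add: rw_def)
  next
    case (Cons l w)
    have l: "valid_letter n l" and ww: "w \<in> vb_words n" using Cons.prems by auto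
    define i where "i = gidx (fst l)"
    have i: "1 \<le> i" "i < n" using l by (simp_all add: i_def valid_letter_def)
    define x where "x = vb_class n [l]"
    define r where "r = vb_class n (rh i)"
    define y where "y = vb_class n w"
    define y' where "y' = vb_class n (rw w)"
    have rww: "rw w \<in> vb_words n" using rlt_words[OF rw_rlt[OF ww]] by simp
    have xG: "x \<in> carrier (VB n)" using l by (auto simp: x_def VB_carrier)
    have rG: "r \<in> carrier (VB n)" using i by (auto simp: r_def VB_carrier rh_def valid_letter_def)
    have yG: "y \<in> carrier (VB n)" using ww by (auto simp: y_def VB_carrier)
    have y'G: "y' \<in> carrier (VB n)" using rww by (auto simp: y'_def VB_carrier)
    have one: "\<one>\<^bsub>VB n\<^esub> \<in> carrier (VB n)" by simp
    have c1: "vb_class n (l # w) = x \<otimes>\<^bsub>VB n\<^esub> y"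
      using VB_mult[of "[l]" n w] l ww by (simp add: x_def y_def)
    have c2: "vb_class n (rw (l # w)) = r \<otimes>\<^bsub>VB n\<^esub> y'"
      using VB_mult[of "rh i" n "rw w"] i rww by (simp add: r_def y'_def rw_Cons i_def rh_words)
    have D1: "(\<lambda>z. delta y z - delta y' z) \<in> J_ideal n" using Cons.IH[OF ww] by (simp add: y_def y'_def)
    have D2: "(\<lambda>z. delta x z - delta r z) \<in> J_ideal n"
    proof (cases l)
      case (Pair g b)
      show ?thesis
      proof (cases g)
        case (Sg j)
        have j: "j = i" using Pair Sg by (simp add: i_def)
        show ?thesis
        proof (cases b)
          case False
          have "x = sigma n i" "r = rho n i" using Pair Sg False j by (simp_all add: x_def r_def sigma_def rho_def sg_def)
          thus ?thesis using Jself i by (auto simp: Jg_def)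
        next
          case True
          have sG: "sigma n i \<in> carrier (VB n)" and rhG: "rho n i \<in> carrier (VB n)" using sigG[OF i] by auto
          have xinv: "x = inv\<^bsub>VB n\<^esub> sigma n i"
            using VB_inv[of "sg i" n] i Pair Sg True j
            by (simp add: x_def sigma_def sg_def winv_def flip_def valid_letter_def)
          have rr: "rho n i \<otimes>\<^bsub>VB n\<^esub> rho n i = \<one>\<^bsub>VB n\<^esub>"
            using VB_mult[of "rh i" n "rh i"] class_eqI[OF vb_eq.rr_inv[OF i]] i
            by (simp add: rho_def rh_words VB_one)
          have rdef: "r = rho n i" by (simp add: r_def rho_def)
          have gen: "(\<lambda>z. delta (sigma n i) z - delta (rho n i) z) \<in> J_ideal n"
            using Jself i by (auto simp: Jg_def)
          have "delta x \<otimes>\<^bsub>V.GR\<^esub> (\<lambda>z. delta (sigma n i) z - delta (rho n i) z) \<otimes>\<^bsub>V.GR\<^esub> delta r \<in> J_ideal n"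
            using V.gr_ideal_rmult[OF JI V.gr_ideal_lmult[OF JI gen V.delta_carrier[OF xG]] V.delta_carrier[OF rG]] .
          moreover have "delta x \<otimes>\<^bsub>V.GR\<^esub> (\<lambda>z. delta (sigma n i) z - delta (rho n i) z) \<otimes>\<^bsub>V.GR\<^esub> delta r
              = (\<lambda>z. delta r z - delta x z)"
          proof -
            have "x \<otimes>\<^bsub>VB n\<^esub> sigma n i \<otimes>\<^bsub>VB n\<^esub> r = r" using xinv rdef sG rhG by simp
            moreover have "x \<otimes>\<^bsub>VB n\<^esub> rho n i \<otimes>\<^bsub>VB n\<^esub> r = x" using rdef rr xG rhG
              by (simp add: V.m_assoc)
            ultimately show ?thesis using V.G3[OF xG sG rhG rG] by simp
          qed
          ultimately have "(\<lambda>z. delta r z - delta x z) \<in> J_ideal n" by simp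
          from V.gr_ideal_neg[OF JI this] show ?thesis by simp
        qed
      next
        case (Rh j)
        have j: "j = i" using Pair Rh by (simp add: i_def)
        have "x = r"
        proof (cases b)
          case False thus ?thesis using Pair Rh j by (simp add: x_def r_def rh_def)
        next
          case True thus ?thesis using Pair Rh j rh_inv_class[OF i] by (simp add: x_def r_def)
        qed
        thus ?thesis using V.gr_ideal_zero[OF JI] by simp
      qed
    qed
    have T1: "delta x \<otimes>\<^bsub>V.GR\<^esub> (\<lambda>z. delta y z - delta y' z) \<otimes>\<^bsub>V.GR\<^esub> delta \<one>\<^bsub>VB n\<^esub> \<in> J_ideal n"
      using V.gr_ideal_rmult[OF JI V.gr_ideal_lmult[OF JI D1 V.delta_carrier[OF xG]] V.delta_carrier[OF one]] .
    have T2: "delta \<one>\<^bsub>VB n\<^esub> \<otimes>\<^bsub>V.GR\<^esub> (\<lambda>z. delta x z - delta r z) \<otimes>\<^bsub>V.GR\<^esub> delta y' \<in> J_ideal n"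
      using V.gr_ideal_rmult[OF JI V.gr_ideal_lmult[OF JI D2 V.delta_carrier[OF one]] V.delta_carrier[OF y'G]] .
    have "(\<lambda>z. (delta (x \<otimes>\<^bsub>VB n\<^esub> y \<otimes>\<^bsub>VB n\<^esub> \<one>\<^bsub>VB n\<^esub>) z - delta (x \<otimes>\<^bsub>VB n\<^esub> y' \<otimes>\<^bsub>VB n\<^esub> \<one>\<^bsub>VB n\<^esub>) z)
        + (delta (\<one>\<^bsub>VB n\<^esub> \<otimes>\<^bsub>VB n\<^esub> x \<otimes>\<^bsub>VB n\<^esub> y') z - delta (\<one>\<^bsub>VB n\<^esub> \<otimes>\<^bsub>VB n\<^esub> r \<otimes>\<^bsub>VB n\<^esub> y') z)) \<in> J_ideal n"
      using V.gr_ideal_add[OF JI T1 T2] V.G3[OF xG yG y'G one] V.G3[OF one xG rG y'G] by simp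
    hence "(\<lambda>z. delta (x \<otimes>\<^bsub>VB n\<^esub> y) z - delta (r \<otimes>\<^bsub>VB n\<^esub> y') z) \<in> J_ideal n"
      using xG yG y'G rG by simp
    thus ?case using c1 c2 by simp
  qed
  have gen: "(\<lambda>x. delta h x - delta \<one>\<^bsub>VB n\<^esub> x) \<in> J_ideal n" if h: "h \<in> VP_set n" for h
  proof -
    have hG: "h \<in> carrier (VB n)" and nuh: "nu h = id" using h by (auto simp: VP_set_def)
    obtain w where w: "w \<in> vb_words n" "h = vb_class n w"
      using hG by (auto simp: VB_carrier)
    have "nu_word (rw w) = id" using rw_nu[of w] nu_class[OF w(1)] nuh w(2) by simp
    hence "vb_eq n (rw w) []" using coxeter[OF rw_rlt[OF w(1)]] by simp
    hence "vb_class n (rw w) = \<one>\<^bsub>VB n\<^esub>" using class_eqI by (simp add: VB_one)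
    thus ?thesis using W[OF w(1)] w(2) by simp
  qed
  have main: "bij_betw V.Om (carrier V.GR) V.tcar \<and>
    V.Om ` ideal_pow V.GR (J_ideal n) d = tensor_span (ideal_pow V.A V.Iaug d) (carrier (group_ring (sym_group n)))"
    by (rule V.vmain[OF JI JE _ assms]) (use gen in simp)
  have Om_eq: "V.Om = Omega n"
    by (rule ext) (simp add: V.Om_def Omega_def V.phi'_def phi_def)
  have tc_eq: "V.tcar = tensor_carrier n"
    by (simp add: V.tcar_def tensor_carrier_def)
  have VPe: "VP n = (VB n)\<lparr>carrier := VP_set n\<rparr>" by (rule VP_def)
  show ?thesis unfolding VPe Om_eq[symmetric] tc_eq[symmetric] by (rule main)
qed


theorem proposition8p2:
  fixes n d :: nat
  assumes "d \<ge> 1"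
  shows "bij_betw (Omega n) (carrier (group_ring (VB n))) (tensor_carrier n)
    \<and> Omega n ` ideal_pow (group_ring (VB n)) (J_ideal n) d
        = tensor_span (ideal_pow (group_ring (VP n)) (aug_ideal (VP n)) d)
                      (carrier (group_ring (sym_group n)))"
  using final_VB[OF assms] .

end
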